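(* Let $K$ be a field and let $I_A\subset K[x_1,\ldots,x_n]$ be a toric ideal of height $2$. Then $\mathrm{Split}(I_A)=\mu(I_A)$ and $\mathrm{Split}_{\mathrm{rad}}(I_A)=\mathrm{bar}(I_A)$.
   Context: $A=\{{\bf a}_1,\ldots,{\bf a}_n\}\subset\mathbb{Z}^m$ with $\ker_{\mathbb{Z}}(A)\cap\mathbb{N}^n=\{{\bf 0}\}$, where $\ker_{\mathbb{Z}}(A)=\{{\bf u}\in\mathbb{Z}^n\mid\sum u_i{\bf a}_i={\bf 0}\}$; $I_A$ is the kernel of $K[x_1,\ldots,x_n]\to K[t_1^{\pm1},\ldots,t_m^{\pm1}]$, $x_i\mapsto{\bf t}^{{\bf a}_i}$, and its height equals $\dim_{\mathbb{Q}}\ker_{\mathbb{Q}}(A)$. $\mu(I_A)$ is the minimal number of generators of $I_A$. $\mathrm{bar}(I_A)$ is the smallest $t$ such that there exist binomials $B_1,\ldots,B_t\in I_A$ with $I_A=\mathrm{rad}(B_1,\ldots,B_t)$. $\mathrm{Split}(I_A)$ is the smallest integer $s$ such that there exist toric ideals $I_{A_1},\ldots,I_{A_s}\subset K[x_1,\ldots,x_n]$ with $I_A=I_{A_1}+\cdots+I_{A_s}$ and $I_{A_i}\ne I_A$ for all $i$; $\mathrm{Split}_{\mathrm{rad}}(I_A)$ is the smallest integer $r$ such that there exist toric ideals $I_{A_1},\ldots,I_{A_r}\subset K[x_1,\ldots,x_n]$ with $I_A=\mathrm{rad}(I_{A_1}+\cdots+I_{A_r})$ and $I_{A_i}\ne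 I_A$ for all $i$. *)

theory Defs
  imports Complex_Main "HOL-Library.Poly_Mapping" "HOL-Library.Function_Algebras"
begin

text \<open>K[x_1,...,x_n] is the subring of those
  polynomials only involving the variables 0,...,n-1.\<close>

type_synonym 'a mpoly = "(nat \<Rightarrow>\<^sub>0 nat) \<Rightarrow>\<^sub>0 'a"

definition polyring :: "nat \<Rightarrow> 'a::field mpoly set" where
  "polyring n = {p. \<forall>e \<in> Poly_Mapping.keys p. \<forall>i \<in> Poly_Mapping.keys e. i < n}"

text \<open>The configuration A = {a_1,...,a_n} in Z^m is given by a :: nat to nat to int,
  a i j being the j-th coordinate of the (i+1)-st vector (i < n, j < m).
  A-degree of a monomial x^e, i.e. the exponent of its image t^(sum e_i a_i).\<close>

definition Adeg :: "nat \<Rightarrow> nat \<Rightarrow> (nat \<Rightarrow> nat \<Rightarrow> int) \<Rightarrow> (nat \<Rightarrow>\<^sub>0 nat) \<Rightarrow> (nat \<Rightarrow> int)" where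
  "Adeg n m a e = (\<lambda>j. if j < m then (\<Sum>i<n. int (Poly_Mapping.lookup e i) * a i j) else 0)"

text \<open>Toric ideal I_A: kernel of K[x_1..x_n] to Laurent polynomials, x_i to t^(a_i). A polynomial
  is mapped to zero iff, for every Laurent monomial t^b, the coefficients of
  the monomials x^e with A-degree b sum to zero.\<close>

definition toric_ideal :: "nat \<Rightarrow> nat \<Rightarrow> (nat \<Rightarrow> nat \<Rightarrow> int) \<Rightarrow> 'a::field mpoly set" where
  "toric_ideal n m a = {p \<in> polyring n.
     \<forall>b::nat \<Rightarrow> int. (\<Sum>e \<in> {e \<in> Poly_Mapping.keys p. Adeg n m a e = b}. Poly_Mapping.lookup p e) = 0}"

definition is_toric_ideal :: "nat \<Rightarrow> 'a::field mpoly set \<Rightarrow> bool" where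
  "is_toric_ideal n J \<longleftrightarrow> (\<exists>m a. J = toric_ideal n m a)"

definition pointed_config :: "nat \<Rightarrow> nat \<Rightarrow> (nat \<Rightarrow> nat \<Rightarrow> int) \<Rightarrow> bool" where
  "pointed_config n m a \<longleftrightarrow> (\<forall>u::nat \<Rightarrow> nat. (\<forall>i\<ge>n. u i = 0) \<and>
      (\<forall>j<m. (\<Sum>i<n. int (u i) * a i j) = 0) \<longrightarrow> (\<forall>i. u i = 0))"

definition kerQ :: "nat \<Rightarrow> nat \<Rightarrow> (nat \<Rightarrow> nat \<Rightarrow> int) \<Rightarrow> (nat \<Rightarrow> rat) set" where
  "kerQ n m a = {u. (\<forall>i\<ge>n. u i = 0) \<and> (\<forall>j<m. (\<Sum>i<n. u i * of_int (a i j)) = 0)}"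

definition dimQ :: "(nat \<Rightarrow> rat) set \<Rightarrow> nat" where
  "dimQ S = Vector_Spaces.vector_space.dim (\<lambda>(c::rat) (v::nat \<Rightarrow> rat). (\<lambda>i. c * v i)) S"

definition ideal_gen :: "nat \<Rightarrow> 'a::field mpoly set \<Rightarrow> 'a mpoly set" where
  "ideal_gen n S = {f. \<exists>(k::nat) r g. (\<forall>i<k. r i \<in> polyring n \<and> g i \<in> S) \<and> f = (\<Sum>i<k. r i * g i)}"

definition ideal_sum :: "nat \<Rightarrow> (nat \<Rightarrow> 'a::field mpoly set) \<Rightarrow> 'a mpoly set" where
  "ideal_sum s J = {f. \<exists>g. (\<forall>i<s. g i \<in> J i) \<and> f = (\<Sum>i<s. g i)}"

definition radical :: "nat \<Rightarrow> 'a::field mpoly set \<Rightarrow> 'a mpoly set" where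
  "radical n J = {f \<in> polyring n. \<exists>k. f ^ k \<in> J}"

definition binomial :: "'a::field mpoly \<Rightarrow> bool" where
  "binomial B \<longleftrightarrow> (\<exists>u v. B = Poly_Mapping.single u 1 - Poly_Mapping.single v 1)"

definition mu :: "nat \<Rightarrow> 'a::field mpoly set \<Rightarrow> nat" where
  "mu n I = (LEAST k. \<exists>S. S \<subseteq> polyring n \<and> finite S \<and> card S = k \<and> ideal_gen n S = I)"

definition bar :: "nat \<Rightarrow> 'a::field mpoly set \<Rightarrow> nat" where
  "bar n I = (LEAST t. \<exists>B. (\<forall>i<t. binomial (B i) \<and> B i \<in> I) \<and>
                          I = radical n (ideal_gen n (B ` {..<t})))"

definition Split :: "nat \<Rightarrow> 'a::field mpoly set \<Rightarrow> nat" where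
  "Split n I = (LEAST s. \<exists>J. (\<forall>i<s. is_toric_ideal n (J i) \<and> J i \<noteq> I) \<and> I = ideal_sum s J)"

definition Split_rad :: "nat \<Rightarrow> 'a::field mpoly set \<Rightarrow> nat" where
  "Split_rad n I = (LEAST r. \<exists>J. (\<forall>i<r. is_toric_ideal n (J i) \<and> J i \<noteq> I) \<and>
                                 I = radical n (ideal_sum r J))"

end

theory Submission
  imports Defs
begin


abbreviation X :: "(nat \<Rightarrow>\<^sub>0 nat) \<Rightarrow> 'a::field mpoly" where
  "X e \<equiv> Poly_Mapping.single e 1"

definition esupp :: "nat \<Rightarrow> (nat \<Rightarrow>\<^sub>0 nat) \<Rightarrow> bool" where
  "esupp n e \<longleftrightarrow> (\<forall>i\<in>Poly_Mapping.keys e. i < n)"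

lemma polyring_iff: "p \<in> polyring n \<longleftrightarrow> (\<forall>e\<in>Poly_Mapping.keys p. esupp n e)"
  by (simp add: polyring_def esupp_def)

lemma mpoly_repr:
  "p = (\<Sum>e\<in>Poly_Mapping.keys p. Poly_Mapping.single e (Poly_Mapping.lookup p e))"
proof (rule poly_mapping_eqI)
  fix k
  show "Poly_Mapping.lookup p k =
    Poly_Mapping.lookup (\<Sum>e\<in>Poly_Mapping.keys p. Poly_Mapping.single e (Poly_Mapping.lookup p e)) k"
    by (cases "k \<in> Poly_Mapping.keys p")
       (auto simp: lookup_sum lookup_single when_def in_keys_iff sum.delta)
qed

lemma keys_diff_sub: "Poly_Mapping.keys (p - q) \<subseteq> Poly_Mapping.keys p \<union> Poly_Mapping.keys (q::'a::ab_group_add mpoly)"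
  by (auto simp: in_keys_iff lookup_minus)

lemma keys_add_sub: "Poly_Mapping.keys (p + q) \<subseteq> Poly_Mapping.keys p \<union> Poly_Mapping.keys (q::'a::ab_group_add mpoly)"
  by (auto simp: in_keys_iff lookup_add)

lemma esupp_add: "esupp n e \<Longrightarrow> esupp n f \<Longrightarrow> esupp n (e + f)"
  unfolding esupp_def by (auto simp: in_keys_iff lookup_add)

lemma esupp_0[simp]: "esupp n 0"
  unfolding esupp_def by simp

lemma polyring_0[simp]: "0 \<in> polyring n"
  by (simp add: polyring_iff)

lemma polyring_add: "p \<in> polyring n \<Longrightarrow> q \<in> polyring n \<Longrightarrow> p + q \<in> polyring n"
  unfolding polyring_iff using keys_add_sub by blast

lemma polyring_diff: "p \<in> polyring n \<Longrightarrow> q \<in> polyring n \<Longrightarrow> p - q \<in> polyring n"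
  unfolding polyring_iff using keys_diff_sub by blast

lemma polyring_uminus: "p \<in> polyring n \<Longrightarrow> - p \<in> polyring n"
  unfolding polyring_iff by simp

lemma polyring_sum: "(\<And>i. i \<in> A \<Longrightarrow> f i \<in> polyring n) \<Longrightarrow> sum f A \<in> polyring n"
  by (induction A rule: infinite_finite_induct) (auto intro: polyring_add)

lemma polyring_single: "esupp n e \<Longrightarrow> Poly_Mapping.single e c \<in> polyring n"
  unfolding polyring_iff by simp

lemma polyring_const: "Poly_Mapping.single 0 c \<in> polyring n"
  by (simp add: polyring_single)

lemma polyring_mult: "p \<in> polyring n \<Longrightarrow> q \<in> polyring n \<Longrightarrow> p * q \<in> polyring n"
  unfolding polyring_iff using keys_mult[of p q] esupp_add by blast

lemma polyring_one: "1 \<in> polyring n"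
  unfolding polyring_iff by simp

lemma polyring_power: "p \<in> polyring n \<Longrightarrow> p ^ k \<in> polyring n"
  by (induction k) (auto intro: polyring_mult polyring_one)

lemma polyring_keys: "p \<in> polyring n \<Longrightarrow> e \<in> Poly_Mapping.keys p \<Longrightarrow> esupp n e"
  by (simp add: polyring_iff)

section \<open>homogeneous parts\<close>

definition hp :: "((nat \<Rightarrow>\<^sub>0 nat) \<Rightarrow> 'b) \<Rightarrow> 'b \<Rightarrow> 'a::field mpoly \<Rightarrow> 'a mpoly" where
  "hp D b p = Abs_poly_mapping (\<lambda>e. if D e = b then Poly_Mapping.lookup p e else 0)"

lemma lookup_hp: "Poly_Mapping.lookup (hp D b p) e = (if D e = b then Poly_Mapping.lookup p e else 0)"
proof -
  have "finite {e. (if D e = b then Poly_Mapping.lookup p e else 0) \<noteq> 0}"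
    by (rule finite_subset[of _ "Poly_Mapping.keys p"]) (auto simp: in_keys_iff split: if_splits)
  then show ?thesis unfolding hp_def by simp
qed

lemma keys_hp: "Poly_Mapping.keys (hp D b p) = {e \<in> Poly_Mapping.keys p. D e = b}"
  by (auto simp: in_keys_iff lookup_hp split: if_splits)

lemma hp_add: "hp D b (p + q) = hp D b p + hp D b q"
  by (rule poly_mapping_eqI) (simp add: lookup_hp lookup_add)

lemma hp_diff: "hp D b (p - q) = hp D b p - hp D b q"
  by (rule poly_mapping_eqI) (simp add: lookup_hp lookup_minus)

lemma hp_zero[simp]: "hp D b 0 = 0"
  by (rule poly_mapping_eqI) (simp add: lookup_hp)

lemma hp_sum: "hp D b (sum f A) = (\<Sum>i\<in>A. hp D b (f i))"
  by (induction A rule: infinite_finite_induct) (auto simp: hp_add)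

lemma hp_single: "hp D b (Poly_Mapping.single e c) = (if D e = b then Poly_Mapping.single e c else 0)"
  by (rule poly_mapping_eqI) (auto simp: lookup_hp lookup_single when_def)

lemma hp_polyring: "p \<in> polyring n \<Longrightarrow> hp D b p \<in> polyring n"
  unfolding polyring_iff keys_hp by auto

lemma mult_single_sum:
  "Poly_Mapping.single c x * p =
     (\<Sum>e\<in>Poly_Mapping.keys p. Poly_Mapping.single (c + e) (x * Poly_Mapping.lookup p e))"
proof -
  have "Poly_Mapping.single c x * p =
     Poly_Mapping.single c x * (\<Sum>e\<in>Poly_Mapping.keys p. Poly_Mapping.single e (Poly_Mapping.lookup p e))"
    by (subst mpoly_repr[of p]) simp
  also have "\<dots> = (\<Sum>e\<in>Poly_Mapping.keys p. Poly_Mapping.single (c + e) (x * Poly_Mapping.lookup p e))"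
    by (simp add: sum_distrib_left mult_single)
  finally show ?thesis .
qed

lemma hp_repr:
  "hp D b p = (\<Sum>e\<in>Poly_Mapping.keys p. if D e = b then Poly_Mapping.single e (Poly_Mapping.lookup p e) else 0)"
  by (subst mpoly_repr[of p]) (simp add: hp_sum hp_single)

lemma hp_mult_single:
  fixes D :: "(nat \<Rightarrow>\<^sub>0 nat) \<Rightarrow> 'b::ab_group_add"
  assumes add: "\<And>c e. D (c + e) = D c + D e"
  shows "hp D b (Poly_Mapping.single c x * p) = Poly_Mapping.single c x * hp D (b - D c) p"
proof -
  have "hp D b (Poly_Mapping.single c x * p) =
     (\<Sum>e\<in>Poly_Mapping.keys p. hp D b (Poly_Mapping.single (c + e) (x * Poly_Mapping.lookup p e)))"
    by (simp add: mult_single_sum hp_sum)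
  also have "\<dots> = (\<Sum>e\<in>Poly_Mapping.keys p. Poly_Mapping.single c x *
      (if D e = b - D c then Poly_Mapping.single e (Poly_Mapping.lookup p e) else 0))"
    by (rule sum.cong) (auto simp: hp_single add mult_single algebra_simps)
  also have "\<dots> = Poly_Mapping.single c x * hp D (b - D c) p"
    by (simp add: hp_repr sum_distrib_left)
  finally show ?thesis .
qed

lemma hp_mult_monom:
  fixes D :: "(nat \<Rightarrow>\<^sub>0 nat) \<Rightarrow> 'b::ab_group_add"
  assumes add: "\<And>c e. D (c + e) = D c + D e"
  shows "hp D b (p * Poly_Mapping.single c x) = hp D (b - D c) p * Poly_Mapping.single c x"
  using hp_mult_single[OF add, of b c x p] by (simp add: mult.commute)

definition eps :: "'a::field mpoly \<Rightarrow> 'a" where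
  "eps p = (\<Sum>e\<in>Poly_Mapping.keys p. Poly_Mapping.lookup p e)"

lemma eps_superset: "finite E \<Longrightarrow> Poly_Mapping.keys p \<subseteq> E \<Longrightarrow> eps p = (\<Sum>e\<in>E. Poly_Mapping.lookup p e)"
  unfolding eps_def by (rule sum.mono_neutral_left) (auto simp: in_keys_iff)

lemma eps_add: "eps (p + q) = eps p + eps q"
proof -
  let ?E = "Poly_Mapping.keys p \<union> Poly_Mapping.keys q"
  have "eps (p + q) = (\<Sum>e\<in>?E. Poly_Mapping.lookup (p + q) e)"
    by (rule eps_superset) (auto dest: subsetD[OF keys_add_sub])
  also have "\<dots> = (\<Sum>e\<in>?E. Poly_Mapping.lookup p e) + (\<Sum>e\<in>?E. Poly_Mapping.lookup q e)"
    by (simp add: lookup_add sum.distrib)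
  also have "\<dots> = eps p + eps q"
    by (simp add: eps_superset[symmetric])
  finally show ?thesis .
qed

lemma eps_zero[simp]: "eps 0 = 0"
  by (simp add: eps_def)

lemma eps_uminus: "eps (- p) = - eps p"
  using eps_add[of p "-p"] by (simp add: eq_neg_iff_add_eq_0 add.commute)

lemma eps_diff: "eps (p - q) = eps p - eps q"
  using eps_add[of p "-q"] by (simp add: eps_uminus)

lemma eps_sum: "eps (sum f A) = (\<Sum>i\<in>A. eps (f i))"
  by (induction A rule: infinite_finite_induct) (auto simp: eps_add)

lemma eps_single[simp]: "eps (Poly_Mapping.single e c) = c"
  by (simp add: eps_def)

lemma eps_mult_single: "eps (Poly_Mapping.single c x * p) = x * eps p"
proof -
  have "eps (Poly_Mapping.single c x * p) = (\<Sum>e\<in>Poly_Mapping.keys p. x * Poly_Mapping.lookup p e)"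
    by (simp add: mult_single_sum eps_sum)
  then show ?thesis by (simp add: eps_def sum_distrib_left)
qed



section \<open>ideal generation\<close>

lemma gen_0: "0 \<in> ideal_gen n S"
  unfolding ideal_gen_def by (rule CollectI, rule exI[of _ 0]) simp

lemma gen_cons:
  assumes "f \<in> ideal_gen n S" "r \<in> polyring n" "s \<in> S"
  shows "r * s + f \<in> ideal_gen n S"
proof -
  obtain k :: nat and rr g where kg: "\<forall>i<k. rr i \<in> polyring n \<and> g i \<in> S" "f = (\<Sum>i<k. rr i * g i)"
    using assms(1) unfolding ideal_gen_def by auto
  define rr' where "rr' = rr(k := r)"
  define g' where "g' = g(k := s)"
  have "r * s + f = (\<Sum>i<Suc k. rr' i * g' i)"
    using kg(2) by (simp add: rr'_def g'_def add.commute)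
  moreover have "\<forall>i<Suc k. rr' i \<in> polyring n \<and> g' i \<in> S"
    using kg(1) assms by (simp add: rr'_def g'_def less_Suc_eq)
  ultimately show ?thesis unfolding ideal_gen_def by blast
qed

lemma gen_induct[consumes 1, case_names zero step]:
  assumes "f \<in> ideal_gen n S"
    and "P 0"
    and "\<And>r s f. r \<in> polyring n \<Longrightarrow> s \<in> S \<Longrightarrow> f \<in> ideal_gen n S \<Longrightarrow> P f \<Longrightarrow> P (r * s + f)"
  shows "P f"
proof -
  obtain k :: nat and rr g where kg: "\<forall>i<k. rr i \<in> polyring n \<and> g i \<in> S" "f = (\<Sum>i<k. rr i * g i)"
    using assms(1) unfolding ideal_gen_def by auto
  have "(\<Sum>i<j. rr i * g i) \<in> ideal_gen n S \<and> P (\<Sum>i<j. rr i * g i)" if "j \<le> k" for j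
    using that
  proof (induction j)
    case 0
    then show ?case by (simp add: gen_0 assms(2))
  next
    case (Suc j)
    then have "rr j \<in> polyring n" "g j \<in> S" using kg(1) by auto
    with Suc show ?case by (auto simp: add.commute intro: gen_cons assms(3))
  qed
  then show ?thesis using kg(2) by blast
qed

lemma gen_least:
  assumes "f \<in> ideal_gen n S" "0 \<in> C" "\<And>x y. x \<in> C \<Longrightarrow> y \<in> C \<Longrightarrow> x + y \<in> C"
    "\<And>r x. r \<in> polyring n \<Longrightarrow> x \<in> S \<Longrightarrow> r * x \<in> C"
  shows "f \<in> C"
  using assms(1) by (induction rule: gen_induct) (auto intro: assms)

lemma gen_base: "s \<in> S \<Longrightarrow> s \<in> ideal_gen n S"
  using gen_cons[OF gen_0 polyring_one, of s S n] by simp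

lemma gen_add: "f \<in> ideal_gen n S \<Longrightarrow> g \<in> ideal_gen n S \<Longrightarrow> f + g \<in> ideal_gen n S"
  by (induction f rule: gen_induct) (auto simp: add.assoc intro: gen_cons)

lemma gen_mult:
  assumes "q \<in> polyring n" "f \<in> ideal_gen n S"
  shows "q * f \<in> ideal_gen n S"
  using assms(2)
proof (induction f rule: gen_induct)
  case zero
  then show ?case by (simp add: gen_0)
next
  case (step r s f)
  then show ?case using assms(1)
    by (simp add: distrib_left mult.assoc[symmetric]) (rule gen_cons, auto intro: polyring_mult)
qed

lemma gen_uminus: "f \<in> ideal_gen n S \<Longrightarrow> - f \<in> ideal_gen n S"
  using gen_mult[OF polyring_uminus[OF polyring_one]] by fastforce

lemma gen_diff: "f \<in> ideal_gen n S \<Longrightarrow> g \<in> ideal_gen n S \<Longrightarrow> f - g \<in> ideal_gen n S"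
  using gen_add[OF _ gen_uminus] by (metis diff_conv_add_uminus)

lemma gen_sum: "(\<And>i. i \<in> A \<Longrightarrow> f i \<in> ideal_gen n S) \<Longrightarrow> sum f A \<in> ideal_gen n S"
  by (induction A rule: infinite_finite_induct) (auto intro: gen_add gen_0)

lemma gen_subset: "S \<subseteq> ideal_gen n T \<Longrightarrow> ideal_gen n S \<subseteq> ideal_gen n T"
  by (auto elim!: gen_least intro: gen_0 gen_add gen_mult)

lemma gen_mono: "S \<subseteq> T \<Longrightarrow> ideal_gen n S \<subseteq> ideal_gen n T"
  by (rule gen_subset) (auto intro: gen_base)

lemma gen_polyring: "S \<subseteq> polyring n \<Longrightarrow> ideal_gen n S \<subseteq> polyring n"
  by (auto elim!: gen_least intro: polyring_add polyring_mult)

lemma gen_single_elem: "r \<in> polyring n \<Longrightarrow> s \<in> S \<Longrightarrow> r * s \<in> ideal_gen n S"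
  by (rule gen_mult, assumption, rule gen_base)

lemma gen_zero_set: "ideal_gen n {0} = {0}"
proof
  show "ideal_gen n {0} \<subseteq> {0}"
  proof
    fix x assume "x \<in> ideal_gen n {0}" then show "x \<in> {0}" by (rule gen_least) auto
  qed
  show "{0} \<subseteq> ideal_gen n {0}" using gen_0 by auto
qed

section \<open>toric ideals basic\<close>

lemma Adeg_add: "Adeg n m a (c + e) = Adeg n m a c + Adeg n m a e"
  by (auto simp: fun_eq_iff Adeg_def lookup_add sum.distrib algebra_simps)

lemma Adeg_zero: "Adeg n m a 0 = 0"
  by (auto simp: fun_eq_iff Adeg_def)

lemma toric_iff: "p \<in> toric_ideal n m a \<longleftrightarrow> p \<in> polyring n \<and> (\<forall>b. eps (hp (Adeg n m a) b p) = 0)"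
proof -
  have "(\<Sum>e \<in> {e \<in> Poly_Mapping.keys p. Adeg n m a e = b}. Poly_Mapping.lookup p e) = eps (hp (Adeg n m a) b p)" for b
    unfolding eps_def keys_hp by (rule sum.cong) (auto simp: lookup_hp)
  then show ?thesis unfolding toric_ideal_def by auto
qed

lemma toric_polyring: "p \<in> toric_ideal n m a \<Longrightarrow> p \<in> polyring n"
  by (simp add: toric_iff)

lemma toric_0: "0 \<in> toric_ideal n m a"
  by (simp add: toric_iff)

lemma toric_add: "p \<in> toric_ideal n m a \<Longrightarrow> q \<in> toric_ideal n m a \<Longrightarrow> p + q \<in> toric_ideal n m a"
  by (simp add: toric_iff hp_add eps_add polyring_add)

lemma toric_diff: "p \<in> toric_ideal n m a \<Longrightarrow> q \<in> toric_ideal n m a \<Longrightarrow> p - q \<in> toric_ideal n m a"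
  by (simp add: toric_iff hp_diff eps_diff polyring_diff)

lemma toric_sum: "(\<And>i. i \<in> A \<Longrightarrow> f i \<in> toric_ideal n m a) \<Longrightarrow> sum f A \<in> toric_ideal n m a"
  by (induction A rule: infinite_finite_induct) (auto intro: toric_add toric_0)

lemma toric_mult_single: "esupp n c \<Longrightarrow> p \<in> toric_ideal n m a \<Longrightarrow> Poly_Mapping.single c x * p \<in> toric_ideal n m a"
  unfolding toric_iff
  by (auto simp: hp_mult_single[OF Adeg_add] eps_mult_single intro: polyring_mult polyring_single)

lemma toric_mult: "r \<in> polyring n \<Longrightarrow> p \<in> toric_ideal n m a \<Longrightarrow> r * p \<in> toric_ideal n m a"
proof -
  assume r: "r \<in> polyring n" and p: "p \<in> toric_ideal n m a"
  have "r * p = (\<Sum>e\<in>Poly_Mapping.keys r. Poly_Mapping.single e (Poly_Mapping.lookup r e) * p)"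
    by (subst mpoly_repr[of r]) (simp add: sum_distrib_right)
  also have "\<dots> \<in> toric_ideal n m a"
    using r p by (auto intro!: toric_sum toric_mult_single simp: polyring_iff)
  finally show ?thesis .
qed

lemma gen_toric: "S \<subseteq> toric_ideal n m a \<Longrightarrow> ideal_gen n S \<subseteq> toric_ideal n m a"
  by (auto elim!: gen_least intro: toric_0 toric_add toric_mult)

lemma bin_toric:
  assumes "esupp n u" "esupp n v" "Adeg n m a u = Adeg n m a v"
  shows "(X u - X v :: 'a::field mpoly) \<in> toric_ideal n m a"
  using assms by (auto simp: toric_iff hp_diff eps_diff hp_single intro!: polyring_diff polyring_single)

lemma keys_bin: "u \<noteq> v \<Longrightarrow> Poly_Mapping.keys (X u - X v :: 'a::field mpoly) = {u, v}"
  by (auto simp: in_keys_iff lookup_minus lookup_single when_def split: if_splits)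

lemma toric_bin:
  assumes "(X u - X v :: 'a::field mpoly) \<in> toric_ideal n m a" "u \<noteq> v"
  shows "esupp n u" "esupp n v" "Adeg n m a u = Adeg n m a v"
proof -
  have "(X u - X v :: 'a mpoly) \<in> polyring n" using assms(1) by (rule toric_polyring)
  then show "esupp n u" "esupp n v" using keys_bin[OF assms(2), where 'a='a] by (auto simp: polyring_iff)
  have "eps (hp (Adeg n m a) (Adeg n m a u) (X u - X v :: 'a mpoly)) = 0"
    using assms(1) by (simp add: toric_iff)
  then show "Adeg n m a u = Adeg n m a v"
    by (auto simp: hp_diff eps_diff hp_single split: if_splits)
qed

section \<open>fiber decomposition\<close>

definition BinK :: "((nat \<Rightarrow>\<^sub>0 nat) \<Rightarrow> 'b) \<Rightarrow> (nat \<Rightarrow>\<^sub>0 nat) set \<Rightarrow> 'a::field mpoly set" where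
  "BinK D E = {X e - X e' | e e'. e \<in> E \<and> e' \<in> E \<and> D e = D e'}"

lemma finite_BinK: "finite E \<Longrightarrow> finite (BinK D E)"
proof -
  assume "finite E"
  have "BinK D E \<subseteq> (\<lambda>(e, e'). X e - X e') ` (E \<times> E)"
    unfolding BinK_def by auto
  then show ?thesis using \<open>finite E\<close> by (auto intro: finite_subset)
qed

lemma fiber_decomp:
  assumes "finite E" "Poly_Mapping.keys p \<subseteq> E" "\<forall>e\<in>E. esupp n e" "\<forall>b. eps (hp D b p) = 0"
  shows "(p::'a::field mpoly) \<in> ideal_gen n (BinK D E)"
  using assms(2,4)
proof (induction "card (Poly_Mapping.keys p)" arbitrary: p rule: less_induct)
  case less
  show ?case
  proof (cases "p = 0")
    case True
    then show ?thesis by (simp add: gen_0)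
  next
    case False
    then obtain e1 where e1: "e1 \<in> Poly_Mapping.keys p"
      by (metis all_not_in_conv keys_eq_empty)
    define c where "c = Poly_Mapping.lookup p e1"
    have c0: "c \<noteq> 0" using e1 by (simp add: c_def in_keys_iff)
    have "\<exists>e0\<in>Poly_Mapping.keys p. e0 \<noteq> e1 \<and> D e0 = D e1"
    proof (rule ccontr)
      assume "\<not> ?thesis"
      then have "Poly_Mapping.keys (hp D (D e1) p) = {e1}"
        using e1 by (auto simp: keys_hp)
      then have "eps (hp D (D e1) p) = c"
        by (simp add: eps_def lookup_hp c_def)
      with less.prems(2) c0 show False by simp
    qed
    then obtain e0 where e0: "e0 \<in> Poly_Mapping.keys p" "e0 \<noteq> e1" "D e0 = D e1" by blast
    define p' where "p' = p - Poly_Mapping.single e1 c + Poly_Mapping.single e0 c"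
    have split: "p = p' + Poly_Mapping.single 0 c * (X e1 - X e0)"
      by (simp add: p'_def right_diff_distrib mult_single)
    have kp': "Poly_Mapping.keys p' \<subseteq> Poly_Mapping.keys p - {e1}"
      using e0 e1 by (auto simp: p'_def in_keys_iff lookup_add lookup_minus lookup_single when_def c_def
          split: if_splits)
    have "card (Poly_Mapping.keys p') < card (Poly_Mapping.keys p)"
      by (rule psubset_card_mono) (use kp' e1 in auto)
    moreover have "Poly_Mapping.keys p' \<subseteq> E" using kp' less.prems(1) by auto
    moreover have "\<forall>b. eps (hp D b p') = 0"
      using less.prems(2) e0 by (simp add: p'_def hp_add hp_diff eps_add eps_diff hp_single)
    ultimately have "p' \<in> ideal_gen n (BinK D E)" using less.hyps by blast
    moreover have "X e1 - X e0 \<in> BinK D E"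
      unfolding BinK_def using e0 e1 less.prems(1) by (intro CollectI exI[of _ e1] exI[of _ e0]) auto
    ultimately show ?thesis
      by (subst split, subst add.commute) (rule gen_cons, auto intro: polyring_const)
  qed
qed

lemma BinK_toric:
  assumes "\<forall>e\<in>E. esupp n e"
  shows "(BinK (Adeg n m a) E :: 'a::field mpoly set) \<subseteq> toric_ideal n m a"
  using assms unfolding BinK_def by (auto intro: bin_toric)

lemma toric_decomp:
  assumes "p \<in> toric_ideal n m a"
  shows "(p::'a::field mpoly) \<in> ideal_gen n (BinK (Adeg n m a) (Poly_Mapping.keys p))"
  using assms by (intro fiber_decomp) (auto simp: toric_iff polyring_iff)

lemma toric_subset:
  assumes "\<And>e e'. esupp n e \<Longrightarrow> esupp n e' \<Longrightarrow> Adeg n m' a' e = Adeg n m' a' e' \<Longrightarrow> Adeg n m a e = Adeg n m a e'"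
  shows "(toric_ideal n m' a' :: 'a::field mpoly set) \<subseteq> toric_ideal n m a"
proof
  fix p :: "'a mpoly" assume p: "p \<in> toric_ideal n m' a'"
  have ek: "\<forall>e\<in>Poly_Mapping.keys p. esupp n e" using toric_polyring[OF p] by (simp add: polyring_iff)
  have "BinK (Adeg n m' a') (Poly_Mapping.keys p) \<subseteq> (toric_ideal n m a :: 'a mpoly set)"
    unfolding BinK_def using ek assms by (auto intro!: bin_toric)
  with toric_decomp[OF p] gen_toric show "p \<in> toric_ideal n m a" by blast
qed



section \<open>integer vectors\<close>

definition zs :: "nat \<Rightarrow> (nat \<Rightarrow> 'b::zero) \<Rightarrow> bool" where
  "zs n z \<longleftrightarrow> (\<forall>i\<ge>n. z i = 0)"

definition kerv :: "nat \<Rightarrow> nat \<Rightarrow> (nat \<Rightarrow> nat \<Rightarrow> int) \<Rightarrow> (nat \<Rightarrow> int) \<Rightarrow> bool" where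
  "kerv n m a z \<longleftrightarrow> (\<forall>j<m. (\<Sum>i<n. z i * a i j) = 0)"

definition KZ :: "nat \<Rightarrow> nat \<Rightarrow> (nat \<Rightarrow> nat \<Rightarrow> int) \<Rightarrow> (nat \<Rightarrow> int) set" where
  "KZ n m a = {z. zs n z \<and> kerv n m a z}"

definition evd :: "(nat \<Rightarrow>\<^sub>0 nat) \<Rightarrow> (nat \<Rightarrow>\<^sub>0 nat) \<Rightarrow> nat \<Rightarrow> int" where
  "evd e e' = (\<lambda>i. int (Poly_Mapping.lookup e i) - int (Poly_Mapping.lookup e' i))"

definition ppart :: "nat \<Rightarrow> (nat \<Rightarrow> int) \<Rightarrow> (nat \<Rightarrow>\<^sub>0 nat)" where
  "ppart n z = Abs_poly_mapping (\<lambda>i. if i < n then nat (z i) else 0)"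

lemma lookup_ppart: "Poly_Mapping.lookup (ppart n z) i = (if i < n then nat (z i) else 0)"
proof -
  have "finite {i. (if i < n then nat (z i) else 0) \<noteq> 0}"
    by (rule finite_subset[of _ "{..<n}"]) (auto split: if_splits)
  then show ?thesis unfolding ppart_def by simp
qed

lemma esupp_ppart: "esupp n (ppart n z)"
  unfolding esupp_def by (auto simp: in_keys_iff lookup_ppart split: if_splits)

lemma evd_ppart: "zs n z \<Longrightarrow> evd (ppart n z) (ppart n (- z)) = z"
  unfolding evd_def zs_def by (auto simp: fun_eq_iff lookup_ppart)

lemma ppart_eq_imp: "zs n z \<Longrightarrow> ppart n z = ppart n (- z) \<Longrightarrow> z = 0"
  using evd_ppart[of n z] unfolding evd_def by (auto simp: fun_eq_iff)

lemma esupp_lookup: "esupp n e \<Longrightarrow> n \<le> i \<Longrightarrow> Poly_Mapping.lookup e i = 0"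
  unfolding esupp_def using leD by (fastforce simp: in_keys_iff)

lemma zs_evd: "esupp n e \<Longrightarrow> esupp n e' \<Longrightarrow> zs n (evd e e')"
  unfolding zs_def evd_def by (auto simp: esupp_lookup)

lemma Adeg_eq_iff: "Adeg n m a e = Adeg n m a e' \<longleftrightarrow> kerv n m a (evd e e')"
proof -
  have "(\<Sum>i<n. evd e e' i * a i j) = (\<Sum>i<n. int (Poly_Mapping.lookup e i) * a i j) - (\<Sum>i<n. int (Poly_Mapping.lookup e' i) * a i j)" for j
    unfolding evd_def by (simp add: sum_subtractf algebra_simps)
  then show ?thesis unfolding Adeg_def kerv_def fun_eq_iff by auto
qed

lemma ker_of_toric_subset:
  assumes sub: "(toric_ideal n m' a' :: 'a::field mpoly set) \<subseteq> toric_ideal n m a"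
    and z: "z \<in> KZ n m' a'"
  shows "z \<in> KZ n m a"
proof (cases "z = 0")
  case True
  then show ?thesis by (simp add: KZ_def kerv_def zs_def)
next
  case False
  let ?u = "ppart n z" and ?v = "ppart n (- z)"
  have zz: "zs n z" "kerv n m' a' z" using z by (auto simp: KZ_def)
  have uv: "?u \<noteq> ?v" using ppart_eq_imp[OF zz(1)] False by blast
  have "Adeg n m' a' ?u = Adeg n m' a' ?v"
    using zz by (simp add: Adeg_eq_iff evd_ppart)
  then have "(X ?u - X ?v :: 'a mpoly) \<in> toric_ideal n m' a'"
    by (intro bin_toric esupp_ppart)
  with sub have "(X ?u - X ?v :: 'a mpoly) \<in> toric_ideal n m a" by blast
  from toric_bin(3)[OF this uv] have "kerv n m a z"
    using zz by (simp add: Adeg_eq_iff evd_ppart)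
  then show ?thesis using zz by (simp add: KZ_def)
qed

lemma toric_subset_of_ker:
  assumes "\<And>z. z \<in> KZ n m a \<Longrightarrow> z \<in> KZ n m' a'"
  shows "(toric_ideal n m a :: 'a::field mpoly set) \<subseteq> toric_ideal n m' a'"
proof (rule toric_subset)
  fix e e' assume "esupp n e" "esupp n e'" "Adeg n m a e = Adeg n m a e'"
  then have "evd e e' \<in> KZ n m a" by (simp add: KZ_def zs_evd Adeg_eq_iff)
  then have "evd e e' \<in> KZ n m' a'" by (rule assms)
  then show "Adeg n m' a' e = Adeg n m' a' e'" by (simp add: KZ_def Adeg_eq_iff)
qed

lemma KZ_scale_inv: "z' \<in> KZ n m a \<Longrightarrow> (N::int) \<noteq> 0 \<Longrightarrow> (\<forall>i. z' i = N * z i) \<Longrightarrow> z \<in> KZ n m a"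
proof -
  assume z': "z' \<in> KZ n m a" and N: "N \<noteq> 0" and eq: "\<forall>i. z' i = N * z i"
  have "zs n z" using z' eq N by (auto simp: KZ_def zs_def)
  moreover have "kerv n m a z"
    unfolding kerv_def
  proof (intro allI impI)
    fix j assume "j < m"
    then have "(\<Sum>i<n. z' i * a i j) = 0" using z' by (auto simp: KZ_def kerv_def)
    then have "N * (\<Sum>i<n. z i * a i j) = 0" using eq by (simp add: sum_distrib_left mult.assoc)
    then show "(\<Sum>i<n. z i * a i j) = 0" using N by simp
  qed
  ultimately show ?thesis by (simp add: KZ_def)
qed

lemma KZ_lin:
  assumes "u \<in> KZ n m a" "v \<in> KZ n m a"
  shows "(\<lambda>i. c * u i + d * v i) \<in> KZ n m a"
proof -
  have "(\<Sum>i<n. (c * u i + d * v i) * a i j) = c * (\<Sum>i<n. u i * a i j) + d * (\<Sum>i<n. v i * a i j)" for j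
    by (simp add: sum.distrib sum_distrib_left distrib_right mult.assoc)
  then show ?thesis using assms by (auto simp: KZ_def zs_def kerv_def)
qed

section \<open>rational vector space\<close>

interpretation qv: vector_space "\<lambda>(c::rat) (v::nat \<Rightarrow> rat). (\<lambda>i. c * v i)"
  by unfold_locales (simp_all add: fun_eq_iff algebra_simps)

lemma dimQ_eq: "dimQ S = qv.dim S"
  by (simp add: dimQ_def)

definition toQ :: "(nat \<Rightarrow> int) \<Rightarrow> nat \<Rightarrow> rat" where
  "toQ z = (\<lambda>i. of_int (z i))"

lemma toQ_kerQ: "toQ z \<in> kerQ n m a \<longleftrightarrow> z \<in> KZ n m a"
proof -
  have h: "(\<Sum>i<n. rat_of_int (z i) * rat_of_int (a i j)) = rat_of_int (\<Sum>i<n. z i * a i j)" for j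
    by simp
  show ?thesis
    unfolding kerQ_def KZ_def kerv_def zs_def toQ_def mem_Collect_eq h of_int_eq_0_iff ..
qed

lemma clear_denoms_fin:
  fixes v :: "nat \<Rightarrow> rat"
  shows "finite A \<Longrightarrow> \<exists>N::int. N > 0 \<and> (\<forall>i\<in>A. of_int N * v i \<in> \<int>)"
proof (induction A rule: finite_induct)
  case empty
  then show ?case by (intro exI[of _ 1]) auto
next
  case (insert x A)
  then obtain N where N: "N > 0" "\<forall>i\<in>A. of_int N * v i \<in> \<int>" by blast
  obtain p q where pq: "quotient_of (v x) = (p, q)" by (cases "quotient_of (v x)")
  have q: "q > 0" using quotient_of_denom_pos[OF pq] .
  have vx: "v x = of_int p / of_int q" using quotient_of_div[OF pq] .
  have "of_int (N * q) * v x = of_int (N * p)"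
    using q by (simp add: vx)
  then have h1: "of_int (N * q) * v x \<in> \<int>" by (metis Ints_of_int)
  have "of_int (N * q) * v i \<in> \<int>" if "i \<in> A" for i
  proof -
    have "of_int (N * q) * v i = of_int q * (of_int N * v i)" by simp
    then show ?thesis using N(2) that by (metis Ints_mult Ints_of_int)
  qed
  then have "\<forall>i\<in>insert x A. of_int (N * q) * v i \<in> \<int>" using h1 by blast
  then show ?case using N q by (intro exI[of _ "N * q"]) auto
qed

lemma Ints_floor: "(x::rat) \<in> \<int> \<Longrightarrow> of_int \<lfloor>x\<rfloor> = x"
  by (metis Ints_cases floor_of_int)

lemma clear_denoms:
  fixes v :: "nat \<Rightarrow> rat"
  assumes "zs n v"
  obtains N :: int where "N > 0" "\<And>i. of_int \<lfloor>of_int N * v i\<rfloor> = of_int N * v i"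
proof -
  obtain N :: int where N: "N > 0" "\<forall>i\<in>{..<n}. of_int N * v i \<in> \<int>"
    using clear_denoms_fin[of "{..<n}" v] by blast
  have "of_int N * v i \<in> \<int>" for i
    using N(2) assms by (cases "i < n") (auto simp: zs_def)
  then show ?thesis using N(1) that Ints_floor by blast
qed

lemma kerQ_zs: "v \<in> kerQ n m a \<Longrightarrow> zs n v"
  by (simp add: kerQ_def zs_def)

lemma kerQ_int:
  assumes v: "v \<in> kerQ n m a"
  obtains N :: int and z where "N > 0" "z \<in> KZ n m a" "\<And>i. of_int (z i) = of_int N * v i"
proof -
  obtain N :: int where N: "N > 0" "\<And>i. of_int \<lfloor>of_int N * v i\<rfloor> = of_int N * v i"
    using clear_denoms[OF kerQ_zs[OF v]] by blast
  define z where "z = (\<lambda>i. \<lfloor>of_int N * v i\<rfloor>)"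
  have "toQ z = (\<lambda>i. of_int N * v i)" by (simp add: toQ_def z_def N(2) fun_eq_iff)
  moreover have "(\<lambda>i. of_int N * v i) \<in> kerQ n m a"
    using v by (auto simp: kerQ_def sum_distrib_left[symmetric] mult.assoc simp flip: sum_distrib_left)
  ultimately have "z \<in> KZ n m a" by (simp flip: toQ_kerQ)
  then show ?thesis using that N by (simp add: z_def)
qed

definition par :: "nat \<Rightarrow> (nat \<Rightarrow> int) \<Rightarrow> (nat \<Rightarrow> int) \<Rightarrow> bool" where
  "par n z w \<longleftrightarrow> (\<forall>p<n. \<forall>q<n. z p * w q = z q * w p)"

lemma kerQ_nonzero:
  assumes "dimQ (kerQ n m a) = 2"
  shows "\<exists>z\<in>KZ n m a. z \<noteq> 0"
proof -
  have "\<not> kerQ n m a \<subseteq> {0}"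
  proof
    assume "kerQ n m a \<subseteq> {0}"
    then have "kerQ n m a \<subseteq> qv.span {}" by simp
    then have "qv.dim (kerQ n m a) \<le> card ({} :: (nat \<Rightarrow> rat) set)" by (rule qv.dim_le_card) simp
    with assms show False by (simp add: dimQ_eq)
  qed
  then obtain v where v: "v \<in> kerQ n m a" "v \<noteq> 0" by blast
  obtain N :: int and z where Nz: "N > 0" "z \<in> KZ n m a" "\<And>i. of_int (z i) = of_int N * v i"
    using kerQ_int[OF v(1)] by blast
  have "z \<noteq> 0"
  proof
    assume "z = 0"
    then have "v i = 0" for i using Nz(3)[of i] Nz(1) by simp
    with v(2) show False by (auto simp: fun_eq_iff)
  qed
  with Nz show ?thesis by blast
qed

lemma kerQ_nonpar:
  assumes dim: "dimQ (kerQ n m a) = 2" and w: "zs n w" "w \<noteq> 0"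
  shows "\<exists>z\<in>KZ n m a. \<not> par n z w"
proof (rule ccontr)
  assume "\<not> ?thesis"
  then have allpar: "\<And>z. z \<in> KZ n m a \<Longrightarrow> par n z w" by blast
  obtain q0 where q0: "q0 < n" "w q0 \<noteq> 0"
    using w by (auto simp: zs_def fun_eq_iff) (metis not_le)
  have "kerQ n m a \<subseteq> qv.span {toQ w}"
  proof
    fix v assume v: "v \<in> kerQ n m a"
    obtain N :: int and z where Nz: "N > 0" "z \<in> KZ n m a" "\<And>i. of_int (z i) = of_int N * v i"
      using kerQ_int[OF v] by blast
    have pz: "par n z w" using allpar[OF Nz(2)] .
    define c :: rat where "c = of_int (z q0) / (of_int N * of_int (w q0))"
    have "v i = c * toQ w i" for i
    proof (cases "i < n")
      case True
      have "z i * w q0 = z q0 * w i" using pz True q0 by (auto simp: par_def)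
      then have "(of_int (z i) :: rat) * of_int (w q0) = of_int (z q0) * of_int (w i)"
        by (metis of_int_mult)
      then have "of_int N * v i * of_int (w q0) = of_int (z q0) * of_int (w i)"
        by (simp add: Nz(3))
      then show ?thesis using Nz(1) q0 unfolding c_def toQ_def
        by (simp add: field_simps)
    next
      case False
      then have "v i = 0" "w i = 0" using kerQ_zs[OF v] w(1) by (auto simp: zs_def)
      then show ?thesis by (simp add: toQ_def)
    qed
    then have "v = (\<lambda>i. c * toQ w i)" by auto
    then show "v \<in> qv.span {toQ w}" using rangeI[of "\<lambda>k i. k * toQ w i" c] by (simp add: qv.span_singleton)
  qed
  then have "qv.dim (kerQ n m a) \<le> card {toQ w}" by (rule qv.dim_le_card) simp
  with dim show False by (simp add: dimQ_eq)
qed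

lemma kerQ_span2:
  assumes dim: "dimQ (kerQ n m a) = 2"
    and v0: "v0 \<in> KZ n m a" "v0 \<noteq> 0" and v: "v \<in> KZ n m a" "\<not> par n v v0"
    and u: "u \<in> KZ n m a"
  shows "\<exists>N::int. N \<noteq> 0 \<and> (\<exists>c1 c2::int. \<forall>i. N * u i = c1 * v0 i + c2 * v i)"
proof -
  let ?W = "toQ v0" and ?V = "toQ v" and ?U = "toQ u"
  have V0: "?W \<noteq> 0"
  proof
    assume "?W = 0"
    from fun_cong[OF this] have "v0 i = 0" for i by (simp add: toQ_def)
    with v0(2) show False by auto
  qed
  have Vns: "?V \<notin> qv.span {?W}"
  proof
    assume "?V \<in> qv.span {?W}"
    then obtain c where c: "?V = (\<lambda>i. c * ?W i)" by (auto simp: qv.span_singleton)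
    have "par n v v0" unfolding par_def
    proof (intro allI impI)
      fix p q
      have "(of_int (v p * v0 q) :: rat) = of_int (v q * v0 p)"
        using fun_cong[OF c, of p] fun_cong[OF c, of q] by (simp add: toQ_def)
      then show "v p * v0 q = v q * v0 p" by (simp only: of_int_eq_iff)
    qed
    with v(2) show False by blast
  qed
  have ind2: "qv.independent {?V, ?W}"
    using V0 Vns by (simp add: qv.independent_insert)
  have inK: "?W \<in> kerQ n m a" "?V \<in> kerQ n m a" "?U \<in> kerQ n m a"
    using v0 v u by (simp_all add: toQ_kerQ)
  have Uin: "?U \<in> qv.span {?V, ?W}"
  proof (rule ccontr)
    assume nU: "?U \<notin> qv.span {?V, ?W}"
    have ind3: "qv.independent {?U, ?V, ?W}"
      using ind2 nU V0 by (simp add: qv.independent_insert qv.span_base)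
    have c3: "card {?U, ?V, ?W} = 3"
    proof -
      have "?U \<noteq> ?V" "?U \<noteq> ?W" using nU qv.span_base by auto
      moreover have "?V \<noteq> ?W" using Vns qv.span_base by auto
      ultimately show ?thesis by simp
    qed
    obtain B where B: "B \<subseteq> kerQ n m a" "qv.independent B" "kerQ n m a \<subseteq> qv.span B" "card B = qv.dim (kerQ n m a)"
      using qv.basis_exists by blast
    have cB: "card B = 2" using B(4) dim by (simp add: dimQ_eq)
    then have fB: "finite B" by (metis card.infinite zero_neq_numeral)
    have "{?U, ?V, ?W} \<subseteq> qv.span B" using inK B(3) by auto
    from qv.independent_span_bound[OF fB ind3 this] c3 cB show False by simp
  qed
  then obtain k where "?U - (\<lambda>i. k * ?V i) \<in> qv.span {?W}"
    by (auto simp: qv.span_breakdown_eq)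
  then obtain k' where kk: "?U - (\<lambda>i. k * ?V i) = (\<lambda>i. k' * ?W i)"
    by (auto simp: qv.span_singleton)
  then have Ueq: "?U i = k' * ?W i + k * ?V i" for i
    using fun_cong[OF kk, of i] by (simp add: algebra_simps)
  define q where "q = (\<lambda>i::nat. if i = 0 then k' else if i = 1 then k else 0)"
  have "zs 2 q" by (simp add: zs_def q_def)
  then obtain N :: int where N: "N > 0" "\<And>i. of_int \<lfloor>of_int N * q i\<rfloor> = of_int N * q i"
    using clear_denoms[of 2 q] by blast

  define c1 where "c1 = \<lfloor>of_int N * q 0\<rfloor>"
  define c2 where "c2 = \<lfloor>of_int N * q 1\<rfloor>"
  have c1: "of_int c1 = of_int N * k'" using N(2)[of 0] by (simp add: c1_def q_def)
  have c2: "of_int c2 = of_int N * k" using N(2)[of 1] by (simp add: c2_def q_def)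
  have "N * u i = c1 * v0 i + c2 * v i" for i
  proof -
    have "(of_int (N * u i) :: rat) = of_int N * ?U i" by (simp add: toQ_def)
    also have "\<dots> = of_int c1 * of_int (v0 i) + of_int c2 * of_int (v i)"
      using Ueq[of i] by (simp add: c1 c2 toQ_def algebra_simps)
    also have "\<dots> = of_int (c1 * v0 i + c2 * v i)" by simp
    finally show ?thesis by (simp only: of_int_eq_iff)
  qed
  then show ?thesis using N(1) by (intro exI[of _ N]) auto
qed



section \<open>toric ideal of the saturation of Z w\<close>

definition aw :: "nat \<Rightarrow> (nat \<Rightarrow> int) \<Rightarrow> nat \<Rightarrow> nat \<Rightarrow> int" where
  "aw n w i j = (if i = j div n then w (j mod n) else 0) - (if i = j mod n then w (j div n) else 0)"

lemma sum_aw: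
  assumes "j < n * n"
  shows "(\<Sum>i<n. z i * aw n w i j) = z (j div n) * w (j mod n) - z (j mod n) * w (j div n)"
proof -
  have n: "n > 0" using assms by (cases n) auto
  have lt: "j div n < n" "j mod n < n" using assms n by (auto simp: div_less_iff_less_mult mult.commute)
  have d: "(\<Sum>i<n. z i * (if i = P then c else 0)) = (if P < n then z P * c else 0)" for P c
    by (simp add: if_distrib sum.delta cong: if_cong)
  have "(\<Sum>i<n. z i * aw n w i j) = (\<Sum>i<n. z i * (if i = j div n then w (j mod n) else 0))
      - (\<Sum>i<n. z i * (if i = j mod n then w (j div n) else 0))"
    unfolding aw_def right_diff_distrib sum_subtractf ..
  also have "\<dots> = z (j div n) * w (j mod n) - z (j mod n) * w (j div n)"
    using lt by (simp only: d) simp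
  finally show ?thesis .
qed

lemma kerv_aw: "kerv n (n * n) (aw n w) z \<longleftrightarrow> par n z w"
proof
  assume k: "kerv n (n * n) (aw n w) z"
  show "par n z w" unfolding par_def
  proof (intro allI impI)
    fix p q assume pq: "p < n" "q < n"
    define j where "j = p * n + q"
    have "Suc p * n \<le> n * n" using pq(1) by (intro mult_le_mono1) simp
    moreover have "j < Suc p * n" using pq(2) by (simp add: j_def)
    ultimately have j: "j < n * n" by linarith
    have jd: "j div n = p" "j mod n = q" using pq by (auto simp: j_def)
    have "(\<Sum>i<n. z i * aw n w i j) = 0" using k j by (simp add: kerv_def)
    then show "z p * w q = z q * w p" using sum_aw[OF j, of z w] jd by simp
  qed
next
  assume p: "par n z w"
  show "kerv n (n * n) (aw n w) z" unfolding kerv_def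
  proof (intro allI impI)
    fix j assume j: "j < n * n"
    have n: "n > 0" using j by (cases n) auto
    have lt: "j div n < n" "j mod n < n" using j n by (auto simp: div_less_iff_less_mult mult.commute)
    show "(\<Sum>i<n. z i * aw n w i j) = 0" using sum_aw[OF j] p lt by (simp add: par_def)
  qed
qed

definition Jw :: "nat \<Rightarrow> (nat \<Rightarrow> int) \<Rightarrow> 'a::field mpoly set" where
  "Jw n w = toric_ideal n (n * n) (aw n w)"

lemma Jw_toric: "is_toric_ideal n (Jw n w)"
  unfolding Jw_def is_toric_ideal_def by blast

lemma KZ_aw: "KZ n (n * n) (aw n w) = {z. zs n z \<and> par n z w}"
  by (auto simp: KZ_def kerv_aw)

lemma Jw_sub:
  assumes w: "w \<in> KZ n m a" "w \<noteq> 0"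
  shows "(Jw n w :: 'a::field mpoly set) \<subseteq> toric_ideal n m a"
  unfolding Jw_def
proof (rule toric_subset_of_ker)
  fix z assume "z \<in> KZ n (n * n) (aw n w)"
  then have z: "zs n z" "par n z w" by (auto simp: KZ_aw)
  obtain q0 where q0: "q0 < n" "w q0 \<noteq> 0"
    using w by (auto simp: KZ_def zs_def fun_eq_iff) (metis not_le)
  have "kerv n m a z" unfolding kerv_def
  proof (intro allI impI)
    fix j assume j: "j < m"
    have "w q0 * (\<Sum>i<n. z i * a i j) = (\<Sum>i<n. (z i * w q0) * a i j)"
      by (simp add: sum_distrib_left algebra_simps)
    also have "\<dots> = (\<Sum>i<n. (z q0 * w i) * a i j)"
      using z(2) q0 by (intro sum.cong) (auto simp: par_def)
    also have "\<dots> = z q0 * (\<Sum>i<n. w i * a i j)"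
      by (simp add: sum_distrib_left algebra_simps)
    also have "\<dots> = 0" using w j by (simp add: KZ_def kerv_def)
    finally show "(\<Sum>i<n. z i * a i j) = 0" using q0 by simp
  qed
  then show "z \<in> KZ n m a" using z by (simp add: KZ_def)
qed

lemma bin_in_Jw:
  assumes "esupp n u" "esupp n v" "par n (evd u v) w"
  shows "(X u - X v :: 'a::field mpoly) \<in> Jw n w"
  unfolding Jw_def using assms by (intro bin_toric) (simp_all add: Adeg_eq_iff kerv_aw)

lemma Jw_ne:
  assumes dim: "dimQ (kerQ n m a) = 2" and w: "zs n w" "w \<noteq> 0"
  shows "(Jw n w :: 'a::field mpoly set) \<noteq> toric_ideal n m a"
proof
  assume eq: "(Jw n w :: 'a::field mpoly set) = toric_ideal n m a"
  obtain z where z: "z \<in> KZ n m a" "\<not> par n z w" using kerQ_nonpar[OF dim w] by blast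
  have zz: "zs n z" "kerv n m a z" using z by (auto simp: KZ_def)
  have "z \<noteq> 0" using z(2) by (auto simp: par_def)
  let ?u = "ppart n z" and ?v = "ppart n (- z)"
  have uv: "?u \<noteq> ?v" using ppart_eq_imp[OF zz(1)] \<open>z \<noteq> 0\<close> by blast
  have "(X ?u - X ?v :: 'a mpoly) \<in> toric_ideal n m a"
    using zz by (intro bin_toric esupp_ppart) (simp add: Adeg_eq_iff evd_ppart)
  then have "(X ?u - X ?v :: 'a mpoly) \<in> toric_ideal n (n * n) (aw n w)"
    using eq by (simp add: Jw_def)
  from toric_bin(3)[OF this uv] have "par n z w"
    using zz by (simp add: Adeg_eq_iff evd_ppart kerv_aw)
  with z(2) show False by blast
qed

lemma evd_zero:
  assumes "evd u v = 0" shows "u = v"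
proof (rule poly_mapping_eqI)
  fix i
  have "evd u v i = 0" using assms by simp
  then show "Poly_Mapping.lookup u i = Poly_Mapping.lookup v i" by (simp add: evd_def)
qed

lemma binomial_split:
  assumes dim: "dimQ (kerQ n m a) = 2"
    and b: "(X u - X v :: 'a::field mpoly) \<in> toric_ideal n m a"
  shows "\<exists>J. is_toric_ideal n J \<and> (X u - X v :: 'a mpoly) \<in> J \<and> J \<subseteq> toric_ideal n m a \<and> J \<noteq> toric_ideal n m a"
proof (cases "u = v")
  case True
  obtain w where w: "w \<in> KZ n m a" "w \<noteq> 0" using kerQ_nonzero[OF dim] by blast
  have "zs n w" using w(1) by (simp add: KZ_def)
  then have "(Jw n w :: 'a mpoly set) \<noteq> toric_ideal n m a"
    using Jw_ne[OF dim _ w(2)] by blast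
  moreover have "(Jw n w :: 'a mpoly set) \<subseteq> toric_ideal n m a" using Jw_sub[OF w] .
  moreover have "(X u - X v :: 'a mpoly) \<in> Jw n w" using True toric_0 unfolding Jw_def by simp
  ultimately show ?thesis using Jw_toric[of n w] by (intro exI[of _ "Jw n w"]) simp
next
  case False
  note tb = toric_bin[OF b False]
  let ?w = "evd u v"
  have w: "?w \<in> KZ n m a" using tb by (simp add: KZ_def zs_evd Adeg_eq_iff)
  have w0: "?w \<noteq> 0" using False evd_zero by blast
  have "(X u - X v :: 'a mpoly) \<in> Jw n ?w"
    using tb by (intro bin_in_Jw) (auto simp: par_def)
  moreover have "zs n ?w" using w by (simp add: KZ_def)
  then have "(Jw n ?w :: 'a mpoly set) \<noteq> toric_ideal n m a"
    using Jw_ne[OF dim _ w0] by blast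
  moreover have "(Jw n ?w :: 'a mpoly set) \<subseteq> toric_ideal n m a" using Jw_sub[OF w w0] .
  ultimately show ?thesis using Jw_toric[of n ?w] by (intro exI[of _ "Jw n ?w"]) simp
qed



lemma ppart_Suc: "ppart n (\<lambda>i. int (Suc k) * w i) = ppart n (\<lambda>i. int k * w i) + ppart n w"
proof (rule poly_mapping_eqI)
  fix i
  have "nat ((1 + int k) * w i) = nat (int k * w i) + nat (w i)"
  proof (cases "w i \<ge> 0")
    case True
    then show ?thesis by (simp add: distrib_right nat_add_distrib)
  next
    case False
    then have "int k * w i \<le> 0" by (simp add: mult_nonneg_nonpos)
    moreover have "(1 + int k) * w i \<le> 0" using False by (simp add: mult_nonneg_nonpos)
    ultimately show ?thesis using False by simp
  qed
  then show "Poly_Mapping.lookup (ppart n (\<lambda>i. int (Suc k) * w i)) i =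
    Poly_Mapping.lookup (ppart n (\<lambda>i. int k * w i) + ppart n w) i"
    by (simp add: lookup_ppart lookup_add)
qed

lemma ppart_zero: "ppart n (\<lambda>i. int 0 * w i) = 0"
  by (rule poly_mapping_eqI) (simp add: lookup_ppart)

lemma X_ppart_pow: "(X (ppart n (\<lambda>i. int k * w i)) :: 'a::field mpoly) = X (ppart n w) ^ k"
proof (induction k)
  case 0
  then show ?case using ppart_zero[of n w] by simp
next
  case (Suc k)
  have "X (ppart n (\<lambda>i. int (Suc k) * w i)) = (X (ppart n (\<lambda>i. int k * w i)) :: 'a mpoly) * X (ppart n w)"
    by (simp only: ppart_Suc mult_single mult_1)
  then show ?case by (simp only: Suc.IH power_Suc mult.commute)
qed

lemma int_min_aux:
  fixes a b d :: int
  assumes "a \<ge> 0" "b \<ge> 0" "a - b = d"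
  shows "nat (min a b) + nat d = nat a" "nat (min a b) + nat (- d) = nat b"
  using assms by (auto simp: min_def nat_add_distrib[symmetric])

lemma bin_div_nat:
  assumes e: "esupp n e" "esupp n e'" and w: "zs n w" and k: "evd e e' = (\<lambda>i. int k * w i)"
  shows "(X e - X e' :: 'a::field mpoly) \<in> ideal_gen n {X (ppart n w) - X (ppart n (- w))}"
proof -
  define c where "c = ppart n (\<lambda>i. min (int (Poly_Mapping.lookup e i)) (int (Poly_Mapping.lookup e' i)))"
  have d: "int (Poly_Mapping.lookup e i) - int (Poly_Mapping.lookup e' i) = int k * w i" for i
    using fun_cong[OF k, of i] by (simp add: evd_def)
  have e1: "e = c + ppart n (\<lambda>i. int k * w i)"
  proof (rule poly_mapping_eqI)
    fix i
    show "Poly_Mapping.lookup e i = Poly_Mapping.lookup (c + ppart n (\<lambda>i. int k * w i)) i"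
    proof (cases "i < n")
      case True
      then show ?thesis using int_min_aux(1)[OF _ _ d[of i]] by (simp add: c_def lookup_add lookup_ppart)
    next
      case False
      then show ?thesis using esupp_lookup[OF e(1)] by (simp add: c_def lookup_add lookup_ppart)
    qed
  qed
  have e2: "e' = c + ppart n (\<lambda>i. int k * (- w) i)"
  proof (rule poly_mapping_eqI)
    fix i
    show "Poly_Mapping.lookup e' i = Poly_Mapping.lookup (c + ppart n (\<lambda>i. int k * (- w) i)) i"
    proof (cases "i < n")
      case True
      then show ?thesis using int_min_aux(2)[OF _ _ d[of i]] by (simp add: c_def lookup_add lookup_ppart)
    next
      case False
      then show ?thesis using esupp_lookup[OF e(2)] by (simp add: c_def lookup_add lookup_ppart)
    qed
  qed
  let ?x = "X (ppart n w) :: 'a mpoly" and ?y = "X (ppart n (- w)) :: 'a mpoly"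
  have "(X e - X e' :: 'a mpoly) = X c * (?x ^ k - ?y ^ k)"
    by (simp add: e1 e2 X_ppart_pow[symmetric] mult_single right_diff_distrib)
  also have "\<dots> = (X c * (\<Sum>i<k. ?y ^ (k - Suc i) * ?x ^ i)) * (?x - ?y)"
    by (simp add: power_diff_sumr2 mult_ac)
  also have "\<dots> \<in> ideal_gen n {?x - ?y}"
    by (rule gen_single_elem)
       (auto intro!: polyring_mult polyring_sum polyring_power polyring_single esupp_ppart simp: c_def)
  finally show ?thesis .
qed

lemma bin_div_int:
  assumes e: "esupp n e" "esupp n e'" and w: "zs n w" and k: "evd e e' = (\<lambda>i. k * w i)"
  shows "(X e - X e' :: 'a::field mpoly) \<in> ideal_gen n {X (ppart n w) - X (ppart n (- w))}"
proof (cases "k \<ge> 0")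
  case True
  then obtain kk where "k = int kk" by (metis nonneg_int_cases)
  then show ?thesis using bin_div_nat[OF e w, of kk] k by simp
next
  case False
  then obtain kk where kk: "k = - int kk" by (metis nonpos_int_cases not_le order_less_imp_le)
  have "evd e' e = (\<lambda>i. int kk * w i)"
  proof
    fix i
    have "evd e e' i = - (int kk * w i)" using k kk by simp
    then show "evd e' e i = int kk * w i" by (simp add: evd_def)
  qed
  from bin_div_nat[OF e(2) e(1) w this]
  have "(X e' - X e :: 'a mpoly) \<in> ideal_gen n {X (ppart n w) - X (ppart n (- w))}" .
  from gen_uminus[OF this] show ?thesis by simp
qed

lemma toric_sub_principal:
  assumes dim: "dimQ (kerQ n m a) = 2"
    and sub: "(toric_ideal n m' a' :: 'a::field mpoly set) \<subseteq> toric_ideal n m a"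
    and ne: "(toric_ideal n m' a' :: 'a mpoly set) \<noteq> toric_ideal n m a"
  shows "\<exists>u v. (toric_ideal n m' a' :: 'a mpoly set) = ideal_gen n {X u - X v}"
proof -
  let ?J = "toric_ideal n m' a' :: 'a mpoly set"
  let ?K = "KZ n m' a'"
  have KK: "z \<in> KZ n m a" if "z \<in> ?K" for z using ker_of_toric_subset[OF sub that] .
  have "\<exists>u0. u0 \<in> KZ n m a \<and> u0 \<notin> ?K"
  proof (rule ccontr)
    assume "\<not> ?thesis"
    then have "\<forall>z. z \<in> KZ n m a \<longrightarrow> z \<in> ?K" by blast
    then have "(toric_ideal n m a :: 'a mpoly set) \<subseteq> ?J" by (intro toric_subset_of_ker) blast
    with sub ne show False by blast
  qed
  then obtain u0 where u0: "u0 \<in> KZ n m a" "u0 \<notin> ?K" by blast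
  have Jgen: "p \<in> ideal_gen n (BinK (Adeg n m' a') (Poly_Mapping.keys p))" if "p \<in> ?J" for p
    using toric_decomp[OF that] .
  have BinK_el: "\<exists>e e'. b = X e - X e' \<and> esupp n e \<and> esupp n e' \<and> evd e e' \<in> ?K"
    if pJ: "p \<in> ?J" and bB: "b \<in> (BinK (Adeg n m' a') (Poly_Mapping.keys p) :: 'a mpoly set)" for p b
  proof -
    obtain e e' where b: "b = X e - X e'" "e \<in> Poly_Mapping.keys p" "e' \<in> Poly_Mapping.keys p"
      "Adeg n m' a' e = Adeg n m' a' e'"
      using bB unfolding BinK_def by blast
    have "esupp n e" "esupp n e'" using b toric_polyring[OF pJ] by (auto simp: polyring_iff)
    then show ?thesis using b by (intro exI[of _ e] exI[of _ e']) (auto simp: KZ_def zs_evd Adeg_eq_iff)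
  qed
  show ?thesis
  proof (cases "\<exists>v0\<in>?K. v0 \<noteq> 0")
    case False
    have "?J \<subseteq> ideal_gen n {0}"
    proof
      fix p assume p: "p \<in> ?J"
      have "BinK (Adeg n m' a') (Poly_Mapping.keys p) \<subseteq> {0 :: 'a mpoly}"
      proof
        fix b :: "'a mpoly" assume "b \<in> BinK (Adeg n m' a') (Poly_Mapping.keys p)"
        then obtain e e' where "b = X e - X e'" "evd e e' \<in> ?K" using BinK_el[OF p] by blast
        with False have "e = e'" using evd_zero by blast
        then show "b \<in> {0}" using \<open>b = X e - X e'\<close> by simp
      qed
      then show "p \<in> ideal_gen n {0}" using Jgen[OF p] gen_mono by blast
    qed
    moreover have "0 \<in> ?J" by (rule toric_0)
    ultimately have "?J = ideal_gen n {X 0 - X 0}" by (auto simp: gen_zero_set)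
    then show ?thesis by blast
  next
    case True
    then obtain v0 where v0: "v0 \<in> ?K" "v0 \<noteq> 0" by blast
    have v0A: "v0 \<in> KZ n m a" using KK[OF v0(1)] .
    have allpar: "par n v v0" if vK: "v \<in> ?K" for v
    proof (rule ccontr)
      assume np: "\<not> par n v v0"
      obtain N c1 c2 where N: "N \<noteq> (0::int)" "\<forall>i. N * u0 i = c1 * v0 i + c2 * v i"
        using kerQ_span2[OF dim v0A v0(2) KK[OF vK] np u0(1)] by blast
      have lin: "(\<lambda>i. c1 * v0 i + c2 * v i) \<in> ?K" using KZ_lin[OF v0(1) vK] .
      have "\<forall>i. (\<lambda>i. c1 * v0 i + c2 * v i) i = N * u0 i" using N(2) by simp
      from KZ_scale_inv[OF lin N(1) this] have "u0 \<in> ?K" .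
      with u0(2) show False by blast
    qed
    obtain i0 where i0: "i0 < n" "v0 i0 \<noteq> 0"
      using v0 by (auto simp: KZ_def zs_def fun_eq_iff) (metis not_le)
    define P where "P k \<longleftrightarrow> k > 0 \<and> (\<exists>v\<in>?K. v i0 = int k)" for k
    have "P (nat \<bar>v0 i0\<bar>)"
    proof (cases "v0 i0 > 0")
      case True
      then show ?thesis using v0 unfolding P_def by (intro conjI bexI[of _ v0]) auto
    next
      case False
      have "(\<lambda>i. (-1) * v0 i + 0 * v0 i) \<in> ?K" using KZ_lin[OF v0(1) v0(1)] .
      then show ?thesis using False i0 unfolding P_def
        by (intro conjI bexI[of _ "\<lambda>i. (-1) * v0 i + 0 * v0 i"]) auto
    qed
    define g where "g = (LEAST k. P k)"
    have Pg: "P g" unfolding g_def by (rule LeastI) fact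
    then obtain w where w: "w \<in> ?K" "w i0 = int g" "g > 0" unfolding P_def by blast
    have mult: "\<exists>k. v = (\<lambda>i. k * w i)" if v: "v \<in> ?K" for v
    proof -
      define k where "k = v i0 div int g"
      define r where "r = v i0 mod int g"
      have vr: "v i0 = k * int g + r" by (simp add: k_def r_def)
      have r: "0 \<le> r" "r < int g" using w(3) by (simp_all add: r_def)
      define v' where "v' = (\<lambda>i. 1 * v i + (- k) * w i)"
      have v'K: "v' \<in> ?K" unfolding v'_def using KZ_lin[OF v w(1)] .
      have v'i0: "v' i0 = r" using vr w(2) by (simp add: v'_def algebra_simps)
      have "r = 0"
      proof (rule ccontr)
        assume "r \<noteq> 0"
        then have "P (nat r)" using v'K v'i0 r unfolding P_def by (intro conjI bexI[of _ v']) auto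
        then have "g \<le> nat r" unfolding g_def by (rule Least_le)
        with r show False by simp
      qed
      have v'0: "v' i = 0" for i
      proof (cases "i < n")
        case True
        have "v' i * v0 i0 = v' i0 * v0 i" using allpar[OF v'K] True i0 by (simp add: par_def)
        then show ?thesis using \<open>r = 0\<close> v'i0 i0 by simp
      next
        case False
        then show ?thesis using v'K by (simp add: KZ_def zs_def)
      qed
      have "v = (\<lambda>i. k * w i)"
      proof
        fix i show "v i = k * w i" using v'0[of i] by (simp add: v'_def)
      qed
      then show ?thesis by blast
    qed
    have wz: "zs n w" using w(1) by (simp add: KZ_def)
    let ?b = "X (ppart n w) - X (ppart n (- w)) :: 'a mpoly"
    have "?J = ideal_gen n {?b}"
    proof
      show "?J \<subseteq> ideal_gen n {?b}"
      proof
        fix p assume p: "p \<in> ?J"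
        have "BinK (Adeg n m' a') (Poly_Mapping.keys p) \<subseteq> ideal_gen n {?b}"
        proof
          fix b :: "'a mpoly" assume "b \<in> BinK (Adeg n m' a') (Poly_Mapping.keys p)"
          then obtain e e' where ee: "b = X e - X e'" "esupp n e" "esupp n e'" "evd e e' \<in> ?K"
            using BinK_el[OF p] by blast
          obtain k where "evd e e' = (\<lambda>i. k * w i)" using mult[OF ee(4)] by blast
          from bin_div_int[OF ee(2,3) wz this] show "b \<in> ideal_gen n {?b}" using ee(1) by simp
        qed
        then show "p \<in> ideal_gen n {?b}" using Jgen[OF p] gen_subset by blast
      qed
      have "?b \<in> ?J"
        using w(1) wz by (intro bin_toric esupp_ppart) (simp add: KZ_def Adeg_eq_iff evd_ppart)
      then show "ideal_gen n {?b} \<subseteq> ?J" using gen_toric[of "{?b}"] by blast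
    qed
    then show ?thesis by blast
  qed
qed



section \<open>counting lemma in vector spaces\<close>

lemma (in vector_space) count_mod:
  assumes S: "finite S" and B: "finite B" and M: "subspace M"
    and sp: "\<forall>b\<in>B. \<exists>y\<in>span S. b - y \<in> M"
    and ind: "\<forall>c. (\<Sum>b\<in>B. scale (c b) b) \<in> M \<longrightarrow> (\<forall>b\<in>B. c b = 0)"
  shows "card B \<le> card S"
proof -
  have "\<forall>b\<in>B. \<exists>y. y \<in> span S \<and> b - y \<in> M" using sp by blast
  from bchoice[OF this] obtain f where f: "\<forall>b\<in>B. f b \<in> span S \<and> b - f b \<in> M" by blast
  define C where "C = (\<lambda>b. b - f b) ` B"
  have fC: "finite C" using B by (simp add: C_def)
  have CM: "C \<subseteq> M" using f by (auto simp: C_def)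
  have spCM: "span C \<subseteq> M" using span_minimal[OF CM M] .
  obtain C' where C': "C' \<subseteq> span C" "independent C'" "span C \<subseteq> span C'" "card C' = dim (span C)"
    by (rule basis_exists)
  have fC': "finite C'" using independent_span_bound[OF fC C'(2) C'(1)] by blast
  have spC'M: "span C' \<subseteq> M"
    using span_minimal[OF C'(1) subspace_span] spCM by auto
  have C'M: "C' \<subseteq> M" using spC'M span_superset by blast
  have disj: "B \<inter> C' = {}"
  proof (rule ccontr)
    assume "B \<inter> C' \<noteq> {}"
    then obtain b where b: "b \<in> B" "b \<in> C'" by blast
    define c where "c = (\<lambda>x. if x = b then (1::'a) else 0)"
    have "(\<Sum>x\<in>B. scale (c x) x) = (\<Sum>x\<in>B. if x = b then x else 0)"
      by (rule sum.cong) (auto simp: c_def)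
    also have "\<dots> = b" using b(1) B by (simp add: sum.delta')
    finally have "(\<Sum>x\<in>B. scale (c x) x) \<in> M" using b(2) C'M by auto
    then have "c b = 0" using ind b(1) by blast
    then show False by (simp add: c_def)
  qed
  have indBC: "independent (B \<union> C')"
  proof
    assume "dependent (B \<union> C')"
    then obtain u where u: "\<exists>v\<in>B \<union> C'. u v \<noteq> 0" "(\<Sum>v\<in>B \<union> C'. scale (u v) v) = 0"
      using dependent_finite[of "B \<union> C'"] B fC' by auto
    have "(\<Sum>v\<in>B. scale (u v) v) + (\<Sum>v\<in>C'. scale (u v) v) = 0"
      using u(2) sum.union_disjoint[OF B fC' disj, of "\<lambda>v. scale (u v) v"] by simp
    then have eqB: "(\<Sum>v\<in>B. scale (u v) v) = - (\<Sum>v\<in>C'. scale (u v) v)"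
      by (simp add: eq_neg_iff_add_eq_0)
    have "(\<Sum>v\<in>C'. scale (u v) v) \<in> span C'"
      by (intro span_sum span_scale span_base)
    then have "- (\<Sum>v\<in>C'. scale (u v) v) \<in> span C'" by (rule span_neg)
    then have "(\<Sum>v\<in>B. scale (u v) v) \<in> M" using eqB spC'M by auto
    then have uB: "\<forall>b\<in>B. u b = 0" using ind by blast
    then have "(\<Sum>v\<in>B. scale (u v) v) = 0" by simp
    then have "(\<Sum>v\<in>C'. scale (u v) v) = 0" using eqB by simp
    then have "\<forall>v\<in>C'. u v = 0" using C'(2) dependent_finite[OF fC'] by auto
    with uB u(1) show False by auto
  qed
  have "B \<union> C' \<subseteq> span (S \<union> C')"
  proof
    fix x assume "x \<in> B \<union> C'"
    then show "x \<in> span (S \<union> C')"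
    proof
      assume x: "x \<in> B"
      have "f x \<in> span (S \<union> C')" using f x span_mono[of S "S \<union> C'"] by auto
      moreover have "x - f x \<in> span (S \<union> C')"
      proof -
        have "x - f x \<in> span C" using x by (auto simp: C_def intro: span_base)
        then show ?thesis using C'(3) span_mono[of C' "S \<union> C'"] by auto
      qed
      ultimately have "f x + (x - f x) \<in> span (S \<union> C')" by (rule span_add)
      then show ?thesis by simp
    next
      assume "x \<in> C'" then show ?thesis by (auto intro: span_base)
    qed
  qed
  from independent_span_bound[OF _ indBC this] have "card (B \<union> C') \<le> card (S \<union> C')"
    using S fC' by auto
  also have "\<dots> \<le> card S + card C'" by (rule card_Un_le)
  finally show ?thesis using card_Un_disjoint[OF B fC' disj] by simp
qed

interpretation mv: vector_space "\<lambda>c (p::'a::field mpoly). Poly_Mapping.single 0 c * p"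
  by unfold_locales (simp_all add: distrib_left single_add distrib_right mult_single mult.assoc[symmetric])

lemma pm_add_eq_0: "(l + q = (0::nat \<Rightarrow>\<^sub>0 nat)) \<longleftrightarrow> l = 0 \<and> q = 0"
proof
  assume "l + q = 0"
  then have "Poly_Mapping.lookup l i = 0 \<and> Poly_Mapping.lookup q i = 0" for i
    by (metis add_is_0 lookup_add lookup_zero)
  then show "l = 0 \<and> q = 0" by (auto intro: poly_mapping_eqI)
qed simp

lemma lookup_mult_0: "Poly_Mapping.lookup (p * q :: 'a::field mpoly) 0 = Poly_Mapping.lookup p 0 * Poly_Mapping.lookup q 0"
proof -
  have "Poly_Mapping.lookup (p * q) 0 = (\<Sum>l. Poly_Mapping.lookup p l * (\<Sum>r. Poly_Mapping.lookup q r when 0 = l + r))"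
    by (rule lookup_mult)
  also have "\<dots> = (\<Sum>l. Poly_Mapping.lookup p l * (Poly_Mapping.lookup q 0 when l = 0))"
  proof (rule Sum_any.cong)
    fix l
    have "(\<Sum>r. Poly_Mapping.lookup q r when 0 = l + r) = (\<Sum>r. (Poly_Mapping.lookup q r when l = 0) when r = 0)"
      by (rule Sum_any.cong) (auto simp: when_def pm_add_eq_0)
    also have "\<dots> = (Poly_Mapping.lookup q 0 when l = 0)" by simp
    finally show "Poly_Mapping.lookup p l * (\<Sum>r. Poly_Mapping.lookup q r when 0 = l + r) =
      Poly_Mapping.lookup p l * (Poly_Mapping.lookup q 0 when l = 0)" by simp
  qed
  also have "\<dots> = (\<Sum>l. (Poly_Mapping.lookup p l * Poly_Mapping.lookup q 0) when l = 0)"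
    by (rule Sum_any.cong) (simp add: when_def)
  also have "\<dots> = Poly_Mapping.lookup p 0 * Poly_Mapping.lookup q 0" by simp
  finally show ?thesis .
qed

lemma lookup_const_mult: "Poly_Mapping.lookup (Poly_Mapping.single 0 c * p :: 'a::field mpoly) e = c * Poly_Mapping.lookup p e"
  by (simp add: mult_map_scale_conv_mult[symmetric] map.rep_eq when_def)

section \<open>Nakayama type argument\<close>

definition Mset :: "nat \<Rightarrow> 'a::field mpoly set \<Rightarrow> 'a mpoly set" where
  "Mset n G = {f. \<exists>p. (\<forall>g\<in>G. p g \<in> polyring n \<and> Poly_Mapping.lookup (p g) 0 = 0) \<and> f = (\<Sum>g\<in>G. p g * g)}"

lemma Mset_subspace: "mv.subspace (Mset n G)"
  unfolding mv.subspace_def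
proof (intro conjI ballI allI)
  show "0 \<in> Mset n G" unfolding Mset_def by (intro CollectI exI[of _ "\<lambda>_. 0"]) simp
next
  fix x y assume "x \<in> Mset n G" "y \<in> Mset n G"
  then obtain p q where p: "\<forall>g\<in>G. p g \<in> polyring n \<and> Poly_Mapping.lookup (p g) 0 = 0" "x = (\<Sum>g\<in>G. p g * g)"
    and q: "\<forall>g\<in>G. q g \<in> polyring n \<and> Poly_Mapping.lookup (q g) 0 = 0" "y = (\<Sum>g\<in>G. q g * g)"
    unfolding Mset_def by blast
  show "x + y \<in> Mset n G" unfolding Mset_def
    using p q by (intro CollectI exI[of _ "\<lambda>g. p g + q g"])
      (auto simp: sum.distrib distrib_right lookup_add intro: polyring_add)
next
  fix c and x :: "'a mpoly" assume "x \<in> Mset n G"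
  then obtain p where p: "\<forall>g\<in>G. p g \<in> polyring n \<and> Poly_Mapping.lookup (p g) 0 = 0" "x = (\<Sum>g\<in>G. p g * g)"
    unfolding Mset_def by blast
  show "Poly_Mapping.single 0 c * x \<in> Mset n G" unfolding Mset_def
    using p by (intro CollectI exI[of _ "\<lambda>g. Poly_Mapping.single 0 c * p g"])
      (auto simp: sum_distrib_left mult.assoc lookup_const_mult intro: polyring_mult polyring_const)
qed

lemma Mset_elem:
  assumes "finite G" "g \<in> G" "p \<in> polyring n" "Poly_Mapping.lookup p 0 = 0"
  shows "p * g \<in> Mset n G"
proof -
  have "(\<Sum>g'\<in>G. (if g' = g then p else 0) * g') = (\<Sum>g'\<in>G. if g' = g then p * g' else 0)"
    by (rule sum.cong) auto
  also have "\<dots> = p * g" using assms(1,2) by (simp add: sum.delta)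
  finally have "(\<Sum>g'\<in>G. (if g' = g then p else 0) * g') = p * g" .
  then show ?thesis unfolding Mset_def using assms
    by (intro CollectI exI[of _ "\<lambda>g'. if g' = g then p else 0"]) auto
qed

lemma Mset_gen:
  assumes "finite G" "q \<in> polyring n" "Poly_Mapping.lookup q 0 = 0" "s \<in> ideal_gen n G"
  shows "q * s \<in> Mset n G"
  using assms(4)
proof (induction s rule: gen_induct)
  case zero
  then show ?case using mv.subspace_0[OF Mset_subspace] by simp
next
  case (step r g f)
  have "q * (r * g + f) = (q * r) * g + q * f" by (simp add: algebra_simps)
  moreover have "(q * r) * g \<in> Mset n G"
    using step assms by (intro Mset_elem) (auto simp: lookup_mult_0 intro: polyring_mult)
  ultimately show ?case using step mv.subspace_add[OF Mset_subspace] by auto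
qed

lemma pointed_deg0:
  assumes "pointed_config n m a" "esupp n e" "Adeg n m a e = 0"
  shows "e = 0"
proof -
  let ?u = "Poly_Mapping.lookup e"
  have "\<forall>i\<ge>n. ?u i = 0" using esupp_lookup[OF assms(2)] by blast
  moreover have "\<forall>j<m. (\<Sum>i<n. int (?u i) * a i j) = 0"
  proof (intro allI impI)
    fix j assume "j < m"
    then show "(\<Sum>i<n. int (?u i) * a i j) = 0" using fun_cong[OF assms(3), of j] by (simp add: Adeg_def)
  qed
  ultimately have "\<forall>i. ?u i = 0" using assms(1) unfolding pointed_config_def by blast
  then show ?thesis by (auto intro: poly_mapping_eqI)
qed

lemma hp_zero_const:
  assumes "pointed_config n m a" "p \<in> polyring n" "Poly_Mapping.lookup p 0 = 0"
  shows "hp (Adeg n m a) 0 p = 0"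
proof (rule poly_mapping_eqI)
  fix e
  show "Poly_Mapping.lookup (hp (Adeg n m a) 0 p) e = Poly_Mapping.lookup 0 e"
  proof (cases "e \<in> Poly_Mapping.keys p \<and> Adeg n m a e = 0")
    case True
    then have "e = 0" using pointed_deg0[OF assms(1)] assms(2) by (auto simp: polyring_iff)
    then show ?thesis using assms(3) by (simp add: lookup_hp)
  next
    case False
    then show ?thesis by (auto simp: lookup_hp in_keys_iff)
  qed
qed

lemma hp_bin:
  assumes "Adeg n m a e = Adeg n m a e'"
  shows "hp (Adeg n m a) d (X e - X e' :: 'a::field mpoly) = (if Adeg n m a e = d then X e - X e' else 0)"
  using assms by (simp add: hp_diff hp_single)

lemma hp_mult_bin:
  assumes "Adeg n m a e = Adeg n m a e'"
  shows "hp (Adeg n m a) d (p * (X e - X e') :: 'a::field mpoly) = hp (Adeg n m a) (d - Adeg n m a e) p * (X e - X e')"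
  using assms by (simp add: right_diff_distrib hp_diff hp_mult_monom[OF Adeg_add])

lemma Adeg_zero': "d - Adeg n m a 0 = d"
  by (simp add: fun_eq_iff Adeg_def)

lemma hp_const_mult: "hp (Adeg n m a) d (Poly_Mapping.single 0 c * p :: 'a::field mpoly) = Poly_Mapping.single 0 c * hp (Adeg n m a) d p"
  by (simp only: hp_mult_single[OF Adeg_add] Adeg_zero')

definition isbin :: "nat \<Rightarrow> nat \<Rightarrow> (nat \<Rightarrow> nat \<Rightarrow> int) \<Rightarrow> 'a::field mpoly \<Rightarrow> bool" where
  "isbin n m a g \<longleftrightarrow> (\<exists>e e'. g = X e - X e' \<and> esupp n e \<and> esupp n e' \<and> Adeg n m a e = Adeg n m a e')"

lemma minimal_indep:
  assumes pointed: "pointed_config n m a"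
    and G: "finite G" "\<forall>g\<in>G. isbin n m a g"
    and b0: "b0 \<in> G"
    and c: "(\<Sum>b\<in>G. Poly_Mapping.single 0 (c b) * b) \<in> Mset n G" "c b0 \<noteq> 0"
  shows "b0 \<in> ideal_gen n (G - {b0})"
proof -
  let ?D = "Adeg n m a"
  obtain p where p: "\<forall>g\<in>G. p g \<in> polyring n \<and> Poly_Mapping.lookup (p g) 0 = 0"
    "(\<Sum>b\<in>G. Poly_Mapping.single 0 (c b) * b) = (\<Sum>g\<in>G. p g * g)"
    using c(1) unfolding Mset_def by blast
  obtain u v where uv: "b0 = X u - X v" "esupp n u" "esupp n v" "?D u = ?D v"
    using G(2) b0 unfolding isbin_def by blast
  define d where "d = ?D u"
  have Gsplit: "\<And>f. (\<Sum>g\<in>G. f g) = f b0 + (\<Sum>g\<in>G - {b0}. f g)"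
    using G(1) b0 by (simp add: sum.remove)
  have hpL: "hp ?D d (Poly_Mapping.single 0 (c b) * b) \<in> ideal_gen n (G - {b0})" if bG: "b \<in> G - {b0}" for b
  proof -
    obtain e e' where ee: "b = X e - X e'" "?D e = ?D e'" using G(2) bG unfolding isbin_def by blast
    have "hp ?D d (Poly_Mapping.single 0 (c b) * b) = Poly_Mapping.single 0 (c b) * (if ?D e = d then b else 0)"
      by (simp add: hp_const_mult ee hp_bin)
    then show ?thesis using bG
      by (auto simp: gen_0 intro: gen_single_elem polyring_const)
  qed
  have hpR: "hp ?D d (p g * g) \<in> ideal_gen n (G - {b0})" if gG: "g \<in> G - {b0}" for g
  proof -
    obtain e e' where ee: "g = X e - X e'" "?D e = ?D e'" using G(2) gG unfolding isbin_def by blast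
    have "hp ?D d (p g * g) = hp ?D (d - ?D e) (p g) * g" by (simp add: ee hp_mult_bin)
    then show ?thesis using gG p(1) by (auto intro: gen_single_elem hp_polyring)
  qed
  have hpb0: "hp ?D d (p b0 * b0) = 0"
  proof -
    have "hp ?D d (p b0 * b0) = hp ?D (d - ?D u) (p b0) * b0" by (simp add: uv hp_mult_bin)
    also have "\<dots> = 0" using hp_zero_const[OF pointed, of "p b0"] p(1) b0 by (simp add: d_def)
    finally show ?thesis .
  qed
  have hpb0': "hp ?D d (Poly_Mapping.single 0 (c b0) * b0) = Poly_Mapping.single 0 (c b0) * b0"
    by (simp add: hp_const_mult uv hp_bin d_def)
  have "hp ?D d (\<Sum>b\<in>G. Poly_Mapping.single 0 (c b) * b) = hp ?D d (\<Sum>g\<in>G. p g * g)"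
    using p(2) by simp
  then have "Poly_Mapping.single 0 (c b0) * b0 + (\<Sum>b\<in>G - {b0}. hp ?D d (Poly_Mapping.single 0 (c b) * b))
      = (\<Sum>g\<in>G - {b0}. hp ?D d (p g * g))"
    by (simp add: hp_sum Gsplit[of "\<lambda>b. hp ?D d (Poly_Mapping.single 0 (c b) * b)"]
        Gsplit[of "\<lambda>g. hp ?D d (p g * g)"] hpb0 hpb0')
  then have eq: "Poly_Mapping.single 0 (c b0) * b0 = (\<Sum>g\<in>G - {b0}. hp ?D d (p g * g))
      - (\<Sum>b\<in>G - {b0}. hp ?D d (Poly_Mapping.single 0 (c b) * b))"
    by (simp add: eq_diff_eq)
  have "Poly_Mapping.single 0 (c b0) * b0 \<in> ideal_gen n (G - {b0})"
    unfolding eq by (intro gen_diff gen_sum hpL hpR)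
  then have "Poly_Mapping.single 0 (inverse (c b0)) * (Poly_Mapping.single 0 (c b0) * b0) \<in> ideal_gen n (G - {b0})"
    by (rule gen_mult[OF polyring_const])
  moreover have "Poly_Mapping.single 0 (inverse (c b0)) * (Poly_Mapping.single 0 (c b0) * b0) = b0"
    using c(2) by (simp add: mult.assoc[symmetric] mult_single)
  ultimately show ?thesis by metis
qed

lemma nakayama:
  assumes pointed: "pointed_config n m a"
    and S: "S \<subseteq> polyring n" "finite S" "ideal_gen n S = (toric_ideal n m a :: 'a::field mpoly set)"
  shows "\<exists>G. finite G \<and> card G \<le> card S \<and> ideal_gen n G = (toric_ideal n m a :: 'a mpoly set) \<and>
      (\<forall>g\<in>G. isbin n m a g)"
proof -
  let ?T = "toric_ideal n m a :: 'a mpoly set"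
  let ?D = "Adeg n m a"
  define G0 where "G0 = (\<Union>s\<in>S. (BinK ?D (Poly_Mapping.keys s) :: 'a mpoly set))"
  have fG0: "finite G0" unfolding G0_def using S(2) by (auto intro: finite_BinK)
  have G0bin: "\<forall>g\<in>G0. isbin n m a g"
  proof
    fix g assume "g \<in> G0"
    then obtain s where s: "s \<in> S" "g \<in> BinK ?D (Poly_Mapping.keys s)" unfolding G0_def by blast
    then obtain e e' where "g = X e - X e'" "e \<in> Poly_Mapping.keys s" "e' \<in> Poly_Mapping.keys s" "?D e = ?D e'"
      unfolding BinK_def by blast
    moreover have "s \<in> polyring n" using s S(1) by blast
    ultimately show "isbin n m a g" unfolding isbin_def by (auto simp: polyring_iff)
  qed
  have G0T: "G0 \<subseteq> ?T" using G0bin by (auto simp: isbin_def intro: bin_toric)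
  have ST: "S \<subseteq> ?T" using S(3) gen_base by blast
  have "S \<subseteq> ideal_gen n G0"
  proof
    fix s assume s: "s \<in> S"
    have "s \<in> ideal_gen n (BinK ?D (Poly_Mapping.keys s))" using toric_decomp ST s by blast
    moreover have "BinK ?D (Poly_Mapping.keys s) \<subseteq> G0" using s unfolding G0_def by blast
    ultimately show "s \<in> ideal_gen n G0" using gen_mono by blast
  qed
  then have genG0: "ideal_gen n G0 = ?T" using gen_subset[of S n G0] S(3) gen_toric[OF G0T] by blast
  obtain G where G: "G \<subseteq> G0 \<and> ideal_gen n G = ?T"
    and Gmin: "\<forall>G'. G' \<subseteq> G0 \<and> ideal_gen n G' = ?T \<longrightarrow> card G \<le> card G'"
    using ex_has_least_nat[of "\<lambda>G. G \<subseteq> G0 \<and> ideal_gen n G = ?T" G0 card] genG0 by blast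
  have fG: "finite G" using G fG0 finite_subset by blast
  have Gbin: "\<forall>g\<in>G. isbin n m a g" using G G0bin by blast
  have "card G \<le> card S"
  proof (rule mv.count_mod[OF S(2) fG Mset_subspace])
    show "\<forall>b\<in>G. \<exists>y\<in>mv.span S. b - y \<in> Mset n G"
    proof
      fix b assume "b \<in> G"
      then have "b \<in> ideal_gen n S" using G S(3) gen_base by blast
      then show "\<exists>y\<in>mv.span S. b - y \<in> Mset n G"
      proof (induction b rule: gen_induct)
        case zero
        have "(0::'a mpoly) \<in> Mset n G" by (rule mv.subspace_0[OF Mset_subspace])
        then show ?case using mv.span_zero[of S] by (intro bexI[of _ 0]) auto
      next
        case (step r s f)
        then obtain y where y: "y \<in> mv.span S" "f - y \<in> Mset n G" by blast
        let ?c = "Poly_Mapping.single 0 (Poly_Mapping.lookup r 0) :: 'a mpoly"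
        have "?c * s + y \<in> mv.span S" by (rule mv.span_add[OF mv.span_scale[OF mv.span_base[OF step(2)]] y(1)])
        moreover have "(r - ?c) * s \<in> Mset n G"
        proof (rule Mset_gen[OF fG])
          show "r - ?c \<in> polyring n" using step(1) by (intro polyring_diff polyring_const)
          show "Poly_Mapping.lookup (r - ?c) 0 = 0" by (simp add: lookup_minus)
          show "s \<in> ideal_gen n G" using step(2) ST G by blast
        qed
        then have "(r - ?c) * s + (f - y) \<in> Mset n G" using y(2) by (rule mv.subspace_add[OF Mset_subspace])
        moreover have "r * s + f - (?c * s + y) = (r - ?c) * s + (f - y)" by (simp add: algebra_simps)
        ultimately have "r * s + f - (?c * s + y) \<in> Mset n G" by (simp only:)
        with \<open>?c * s + y \<in> mv.span S\<close> show ?case by blast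
      qed
    qed
    show "\<forall>c. (\<Sum>b\<in>G. Poly_Mapping.single 0 (c b) * b) \<in> Mset n G \<longrightarrow> (\<forall>b\<in>G. c b = 0)"
    proof (intro allI impI ballI)
      fix c b0 assume c: "(\<Sum>b\<in>G. Poly_Mapping.single 0 (c b) * b) \<in> Mset n G" and b0: "b0 \<in> G"
      show "c b0 = 0"
      proof (rule ccontr)
        assume "c b0 \<noteq> 0"
        from minimal_indep[OF pointed fG Gbin b0 c this]
        have b0g: "b0 \<in> ideal_gen n (G - {b0})" .
        have "G \<subseteq> ideal_gen n (G - {b0})"
        proof
          fix g assume "g \<in> G"
          then show "g \<in> ideal_gen n (G - {b0})"
            using b0g by (cases "g = b0") (auto intro: gen_base)
        qed
        then have "ideal_gen n G \<subseteq> ideal_gen n (G - {b0})" by (rule gen_subset)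
        moreover have "ideal_gen n (G - {b0}) \<subseteq> ideal_gen n G" by (rule gen_mono) (rule Diff_subset)
        ultimately have "ideal_gen n (G - {b0}) = ?T" using G by (simp add: subset_antisym)
        moreover have "G - {b0} \<subseteq> G0" using G by auto
        ultimately have "card G \<le> card (G - {b0})" using Gmin[rule_format, of "G - {b0}"] by simp
        moreover have "card (G - {b0}) < card G" using fG b0 by (rule card_Diff1_less)
        ultimately show False by simp
      qed
    qed
  qed
  then show ?thesis using fG G Gbin by blast
qed



lemma Least_transfer:
  fixes P Q :: "nat \<Rightarrow> bool"
  assumes PQ: "\<And>k. P k \<Longrightarrow> \<exists>j\<le>k. Q j" and QP: "\<And>k. Q k \<Longrightarrow> \<exists>j\<le>k. P j"
  shows "Least P = Least Q"
proof (cases "\<exists>k. P k")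
  case True
  then obtain k where "P k" by blast
  then have P0: "P (Least P)" by (rule LeastI)
  then obtain j where j: "j \<le> Least P" "Q j" using PQ by blast
  from j(2) have Q0: "Q (Least Q)" by (rule LeastI)
  have "Least Q \<le> j" using j(2) by (rule Least_le)
  obtain j' where j': "j' \<le> Least Q" "P j'" using QP[OF Q0] by blast
  have "Least P \<le> j'" using j'(2) by (rule Least_le)
  show ?thesis using j j' \<open>Least Q \<le> j\<close> \<open>Least P \<le> j'\<close> by simp
next
  case False
  then have "\<not> Q k" for k using QP by blast
  with False have "P = Q" by (auto simp: fun_eq_iff)
  then show ?thesis by simp
qed

lemma toric_is_ideal:
  assumes "is_toric_ideal n (J :: 'a::field mpoly set)"
  shows "0 \<in> J" "\<And>x y. x \<in> J \<Longrightarrow> y \<in> J \<Longrightarrow> x + y \<in> J"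
    "\<And>r x. r \<in> polyring n \<Longrightarrow> x \<in> J \<Longrightarrow> r * x \<in> J" "J \<subseteq> polyring n"
proof -
  obtain m a where J: "J = toric_ideal n m a" using assms unfolding is_toric_ideal_def by blast
  show "0 \<in> J" unfolding J by (rule toric_0)
  show "\<And>x y. x \<in> J \<Longrightarrow> y \<in> J \<Longrightarrow> x + y \<in> J" unfolding J by (rule toric_add)
  show "\<And>r x. r \<in> polyring n \<Longrightarrow> x \<in> J \<Longrightarrow> r * x \<in> J" unfolding J by (rule toric_mult)
  show "J \<subseteq> polyring n" unfolding J using toric_polyring by blast
qed

lemma in_ideal_sum:
  assumes "\<forall>j<s. is_toric_ideal n (J j)" "i < s" "(x :: 'a::field mpoly) \<in> J i"
  shows "x \<in> ideal_sum s J"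
proof -
  have "(\<Sum>j<s. if j = i then x else 0) = x" using assms(2) by (simp add: sum.delta)
  moreover have "\<forall>j<s. (if j = i then x else 0) \<in> J j"
  proof (intro allI impI)
    fix j assume "j < s"
    then have "0 \<in> J j" using assms(1) toric_is_ideal(1)[of n "J j"] by blast
    then show "(if j = i then x else 0) \<in> J j" using assms(3) by simp
  qed
  ultimately show ?thesis unfolding ideal_sum_def by (intro CollectI exI[of _ "\<lambda>j. if j = i then x else 0"]) auto
qed

lemma ideal_sum_sub:
  assumes "\<forall>i<s. J i \<subseteq> (toric_ideal n m a :: 'a::field mpoly set)"
  shows "ideal_sum s J \<subseteq> toric_ideal n m a"
proof
  fix f assume "f \<in> ideal_sum s J"
  then obtain g where g: "\<forall>i<s. g i \<in> J i" "f = (\<Sum>i<s. g i)" unfolding ideal_sum_def by blast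
  show "f \<in> toric_ideal n m a" unfolding g(2) using g(1) assms by (intro toric_sum) auto
qed

lemma ideal_sum_polyring:
  assumes "\<forall>i<s. is_toric_ideal n (J i)"
  shows "ideal_sum s J \<subseteq> (polyring n :: 'a::field mpoly set)"
proof
  fix f :: "'a mpoly" assume "f \<in> ideal_sum s J"
  then obtain g where g: "\<forall>i<s. g i \<in> J i" "f = (\<Sum>i<s. g i)" unfolding ideal_sum_def by blast
  have "g i \<in> polyring n" if "i < s" for i using toric_is_ideal(4)[of n "J i"] g(1) assms that by blast
  then show "f \<in> polyring n" unfolding g(2) by (intro polyring_sum) auto
qed

lemma gen_sub_ideal_sum:
  assumes "\<forall>i<s. is_toric_ideal n (J i) \<and> (\<beta> i :: 'a::field mpoly) \<in> J i"
  shows "ideal_gen n (\<beta> ` {..<s}) \<subseteq> ideal_sum s J"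
proof
  fix f assume f: "f \<in> ideal_gen n (\<beta> ` {..<s})"
  show "f \<in> ideal_sum s J"
  proof (rule gen_least[OF f])
    show "0 \<in> ideal_sum s J" unfolding ideal_sum_def
      using assms toric_is_ideal(1) by (intro CollectI exI[of _ "\<lambda>_. 0"]) auto
  next
    fix x y assume "x \<in> ideal_sum s J" "y \<in> ideal_sum s J"
    then obtain g h where g: "\<forall>i<s. g i \<in> J i" "x = (\<Sum>i<s. g i)" and h: "\<forall>i<s. h i \<in> J i" "y = (\<Sum>i<s. h i)"
      unfolding ideal_sum_def by blast
    have "g i + h i \<in> J i" if "i < s" for i using toric_is_ideal(2)[of n "J i"] g(1) h(1) assms that by blast
    then show "x + y \<in> ideal_sum s J" unfolding ideal_sum_def
      using g h by (intro CollectI exI[of _ "\<lambda>i. g i + h i"]) (auto simp: sum.distrib)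
  next
    fix r x :: "'a mpoly" assume r: "r \<in> polyring n" and x: "x \<in> \<beta> ` {..<s}"
    then obtain i where i: "i < s" "x = \<beta> i" by blast
    have "r * x \<in> J i" using assms i r toric_is_ideal(3)[of n "J i" r x] by auto
    then show "r * x \<in> ideal_sum s J" using in_ideal_sum[OF _ i(1)] assms by blast
  qed
qed

lemma ideal_sum_principal:
  assumes "\<forall>i<s. is_toric_ideal n (J i) \<and> J i = ideal_gen n {\<beta> i :: 'a::field mpoly}"
  shows "ideal_sum s J = ideal_gen n (\<beta> ` {..<s})"
proof
  show "ideal_gen n (\<beta> ` {..<s}) \<subseteq> ideal_sum s J"
    using assms by (intro gen_sub_ideal_sum) (auto intro: gen_base)
  show "ideal_sum s J \<subseteq> ideal_gen n (\<beta> ` {..<s})"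
  proof
    fix f assume "f \<in> ideal_sum s J"
    then obtain g where g: "\<forall>i<s. g i \<in> J i" "f = (\<Sum>i<s. g i)" unfolding ideal_sum_def by blast
    have "g i \<in> ideal_gen n (\<beta> ` {..<s})" if "i < s" for i
    proof -
      have "g i \<in> ideal_gen n {\<beta> i}" using g(1) assms that by auto
      moreover have "ideal_gen n {\<beta> i} \<subseteq> ideal_gen n (\<beta> ` {..<s})" using that by (intro gen_mono) auto
      ultimately show ?thesis by blast
    qed
    then show "f \<in> ideal_gen n (\<beta> ` {..<s})" unfolding g(2) by (intro gen_sum) auto
  qed
qed

lemma radical_mono: "A \<subseteq> B \<Longrightarrow> radical n A \<subseteq> radical n B"
  unfolding radical_def by blast

lemma radical_idem: "radical n (radical n A) \<subseteq> radical n A"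
proof
  fix f assume "f \<in> radical n (radical n A)"
  then obtain k where "f \<in> polyring n" "f ^ k \<in> radical n A" unfolding radical_def by blast
  then obtain j where "f \<in> polyring n" "(f ^ k) ^ j \<in> A" unfolding radical_def by blast
  then show "f \<in> radical n A" unfolding radical_def by (auto simp: power_mult[symmetric])
qed

lemma subset_radical: "A \<subseteq> polyring n \<Longrightarrow> A \<subseteq> radical n A"
  unfolding radical_def by (auto intro: exI[of _ 1])

lemma toric_binomial_sub:
  assumes dim: "dimQ (kerQ n m a) = 2"
    and J: "is_toric_ideal n J" "J \<subseteq> (toric_ideal n m a :: 'a::field mpoly set)" "J \<noteq> toric_ideal n m a"
  shows "\<exists>b. binomial b \<and> J = ideal_gen n {b}"
proof -
  obtain m' a' where "J = toric_ideal n m' a'" using J(1) unfolding is_toric_ideal_def by blast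
  then obtain u v where "J = ideal_gen n {X u - X v :: 'a mpoly}"
    using toric_sub_principal[OF dim, of m' a'] J by blast
  then show ?thesis unfolding binomial_def by blast
qed

theorem main_split:
  fixes n m :: nat and a :: "nat \<Rightarrow> nat \<Rightarrow> int"
  assumes pointed: "pointed_config n m a"
    and dim: "dimQ (kerQ n m a) = 2"
  shows "Split n (toric_ideal n m a :: 'a::field mpoly set) = mu n (toric_ideal n m a :: 'a mpoly set)"
proof -
  let ?T = "toric_ideal n m a :: 'a mpoly set"
  show ?thesis unfolding Split_def mu_def
  proof (rule Least_transfer)
    fix s :: nat assume "\<exists>J. (\<forall>i<s. is_toric_ideal n (J i) \<and> J i \<noteq> ?T) \<and> ?T = ideal_sum s J"
    then obtain J where J: "\<forall>i<s. is_toric_ideal n (J i) \<and> J i \<noteq> ?T" "?T = ideal_sum s J" by blast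
    have "\<forall>i\<in>{..<s}. \<exists>b. binomial b \<and> J i = ideal_gen n {b}"
    proof
      fix i assume i: "i \<in> {..<s}"
      have Ji: "is_toric_ideal n (J i)" "J i \<noteq> ?T" using J(1) i by auto
      have "J i \<subseteq> ideal_sum s J" using in_ideal_sum[of s n J i] J(1) i by auto
      then have "J i \<subseteq> ?T" using J(2) by simp
      then show "\<exists>b. binomial b \<and> J i = ideal_gen n {b}"
        by (rule toric_binomial_sub[OF dim Ji(1) _ Ji(2)])
    qed
    from bchoice[OF this] obtain \<beta> where \<beta>: "\<forall>i\<in>{..<s}. binomial (\<beta> i) \<and> J i = ideal_gen n {\<beta> i}" by blast
    have eq: "ideal_sum s J = ideal_gen n (\<beta> ` {..<s})"
      using J(1) \<beta> by (intro ideal_sum_principal) auto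
    have "\<beta> ` {..<s} \<subseteq> ?T"
    proof
      fix x assume "x \<in> \<beta> ` {..<s}"
      then have "x \<in> ideal_gen n (\<beta> ` {..<s})" by (rule gen_base)
      then show "x \<in> ?T" using eq J(2) by simp
    qed
    then have "\<beta> ` {..<s} \<subseteq> polyring n" using toric_polyring by blast
    moreover have "card (\<beta> ` {..<s}) \<le> s" using card_image_le[of "{..<s}" \<beta>] by simp
    ultimately show "\<exists>j\<le>s. \<exists>S. S \<subseteq> polyring n \<and> finite S \<and> card S = j \<and> ideal_gen n S = ?T"
      using eq J(2) by (intro exI[of _ "card (\<beta> ` {..<s})"]) auto
  next
    fix k :: nat assume "\<exists>S. S \<subseteq> polyring n \<and> finite S \<and> card S = k \<and> ideal_gen n S = ?T"
    then obtain S where S: "S \<subseteq> polyring n" "finite S" "card S = k" "ideal_gen n S = ?T" by blast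
    obtain G where G: "finite G" "card G \<le> card S" "ideal_gen n G = ?T" "\<forall>g\<in>G. isbin n m a g"
      using nakayama[OF pointed S(1,2,4)] by blast
    obtain h where h: "bij_betw h {0..<card G} G" using ex_bij_betw_nat_finite[OF G(1)] by blast
    have hG: "h ` {..<card G} = G" using h by (simp add: bij_betw_def lessThan_atLeast0)
    have "\<forall>i\<in>{..<card G}. \<exists>J. is_toric_ideal n J \<and> h i \<in> J \<and> J \<subseteq> ?T \<and> J \<noteq> ?T"
    proof
      fix i assume "i \<in> {..<card G}"
      then have hi: "h i \<in> G" using hG by blast
      then obtain u v where uv: "h i = X u - X v" using G(4) unfolding isbin_def by blast
      have "h i \<in> ?T" using hi G(3) gen_base by blast
      then show "\<exists>J. is_toric_ideal n J \<and> h i \<in> J \<and> J \<subseteq> ?T \<and> J \<noteq> ?T"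
        using binomial_split[OF dim, of u v] uv by auto
    qed
    from bchoice[OF this] obtain J where J: "\<forall>i\<in>{..<card G}. is_toric_ideal n (J i) \<and> h i \<in> J i \<and> J i \<subseteq> ?T \<and> J i \<noteq> ?T"
      by blast
    have "ideal_sum (card G) J \<subseteq> ?T" using J by (intro ideal_sum_sub) auto
    moreover have "ideal_gen n (h ` {..<card G}) \<subseteq> ideal_sum (card G) J"
      using J by (intro gen_sub_ideal_sum) auto
    ultimately have "?T = ideal_sum (card G) J" using hG G(3) by auto
    then show "\<exists>j\<le>k. \<exists>J. (\<forall>i<j. is_toric_ideal n (J i) \<and> J i \<noteq> ?T) \<and> ?T = ideal_sum j J"
      using J G(2) S(3) by (intro exI[of _ "card G"] conjI exI[of _ J]) auto
  qed
qed

theorem main_rad: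
  fixes n m :: nat and a :: "nat \<Rightarrow> nat \<Rightarrow> int"
  assumes dim: "dimQ (kerQ n m a) = 2"
  shows "Split_rad n (toric_ideal n m a :: 'a::field mpoly set) = bar n (toric_ideal n m a :: 'a mpoly set)"
proof -
  let ?T = "toric_ideal n m a :: 'a mpoly set"
  show ?thesis unfolding Split_rad_def bar_def
  proof (rule Least_transfer)
    fix r :: nat assume "\<exists>J. (\<forall>i<r. is_toric_ideal n (J i) \<and> J i \<noteq> ?T) \<and> ?T = radical n (ideal_sum r J)"
    then obtain J where J: "\<forall>i<r. is_toric_ideal n (J i) \<and> J i \<noteq> ?T" "?T = radical n (ideal_sum r J)" by blast
    have sumpoly: "ideal_sum r J \<subseteq> polyring n" using J(1) by (intro ideal_sum_polyring) auto
    have "\<forall>i\<in>{..<r}. \<exists>b. binomial b \<and> J i = ideal_gen n {b}"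
    proof
      fix i assume i: "i \<in> {..<r}"
      have "J i \<subseteq> ideal_sum r J" using in_ideal_sum[of r n J i] J i by auto
      then have "J i \<subseteq> ?T" using subset_radical[OF sumpoly] J(2) by auto
      moreover have Ji: "is_toric_ideal n (J i)" "J i \<noteq> ?T" using J(1) i by auto
      ultimately show "\<exists>b. binomial b \<and> J i = ideal_gen n {b}"
        using toric_binomial_sub[OF dim Ji(1) _ Ji(2)] by blast
    qed
    from bchoice[OF this] obtain \<beta> where \<beta>: "\<forall>i\<in>{..<r}. binomial (\<beta> i) \<and> J i = ideal_gen n {\<beta> i}" by blast
    have eq: "ideal_sum r J = ideal_gen n (\<beta> ` {..<r})"
      using J(1) \<beta> by (intro ideal_sum_principal) auto
    have "\<forall>i<r. binomial (\<beta> i) \<and> \<beta> i \<in> ?T"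
    proof (intro allI impI conjI)
      fix i assume i: "i < r"
      show "binomial (\<beta> i)" using \<beta> i by auto
      have "\<beta> i \<in> ideal_gen n (\<beta> ` {..<r})" using i by (intro gen_base) auto
      then have "\<beta> i \<in> ideal_sum r J" using eq by simp
      then show "\<beta> i \<in> ?T" using subset_radical[OF sumpoly] J(2) by auto
    qed
    then show "\<exists>j\<le>r. \<exists>B. (\<forall>i<j. binomial (B i) \<and> B i \<in> ?T) \<and> ?T = radical n (ideal_gen n (B ` {..<j}))"
      using J(2) eq by (intro exI[of _ r] conjI exI[of _ \<beta>]) auto
  next
    fix t :: nat assume "\<exists>B. (\<forall>i<t. binomial (B i) \<and> B i \<in> ?T) \<and> ?T = radical n (ideal_gen n (B ` {..<t}))"
    then obtain B where B: "\<forall>i<t. binomial (B i) \<and> B i \<in> ?T" "?T = radical n (ideal_gen n (B ` {..<t}))"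
      by blast
    have "\<forall>i\<in>{..<t}. \<exists>J. is_toric_ideal n J \<and> B i \<in> J \<and> J \<subseteq> ?T \<and> J \<noteq> ?T"
    proof
      fix i assume "i \<in> {..<t}"
      then have bi: "binomial (B i)" "B i \<in> ?T" using B(1) by auto
      then obtain u v where uv: "B i = X u - X v" unfolding binomial_def by blast
      show "\<exists>J. is_toric_ideal n J \<and> B i \<in> J \<and> J \<subseteq> ?T \<and> J \<noteq> ?T"
        using binomial_split[OF dim, of u v] uv bi(2) by auto
    qed
    from bchoice[OF this] obtain J where J: "\<forall>i\<in>{..<t}. is_toric_ideal n (J i) \<and> B i \<in> J i \<and> J i \<subseteq> ?T \<and> J i \<noteq> ?T"
      by blast
    have s1: "ideal_sum t J \<subseteq> ?T" using J by (intro ideal_sum_sub) auto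
    have s2: "ideal_gen n (B ` {..<t}) \<subseteq> ideal_sum t J"
      using J by (intro gen_sub_ideal_sum) auto
    have "?T \<subseteq> radical n (ideal_sum t J)" using B(2) radical_mono[OF s2] by simp
    moreover have "radical n (ideal_sum t J) \<subseteq> ?T"
    proof -
      have "radical n (ideal_sum t J) \<subseteq> radical n ?T" by (rule radical_mono[OF s1])
      also have "\<dots> = radical n (radical n (ideal_gen n (B ` {..<t})))" using B(2) by simp
      also have "\<dots> \<subseteq> radical n (ideal_gen n (B ` {..<t}))" by (rule radical_idem)
      finally show ?thesis using B(2) by simp
    qed
    ultimately have "?T = radical n (ideal_sum t J)" by blast
    then show "\<exists>j\<le>t. \<exists>J. (\<forall>i<j. is_toric_ideal n (J i) \<and> J i \<noteq> ?T) \<and> ?T = radical n (ideal_sum j J)"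
      using J by (intro exI[of _ t] conjI exI[of _ J]) auto
  qed
qed

theorem theorem4p1:
  fixes n m :: nat and a :: "nat \<Rightarrow> nat \<Rightarrow> int"
  assumes "pointed_config n m a"
    and "dimQ (kerQ n m a) = 2"
  shows "Split n (toric_ideal n m a :: 'a::field mpoly set) = mu n (toric_ideal n m a :: 'a mpoly set)
     \<and> Split_rad n (toric_ideal n m a :: 'a mpoly set) = bar n (toric_ideal n m a :: 'a mpoly set)"
  using main_split[OF assms] main_rad[OF assms(2)] by blast

end
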